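(* Let $d\ge 2$ and $n\ge 1$ be integers and let $G=(E,D,\partial D)$ be the $d$-dimensional hypercubic lattice graph described in the context. If $\gamma,\gamma':E\to(0,\infty)$ are two conductivities with equal Dirichlet-to-Neumann matrices, $\Lambda_\gamma=\Lambda_{\gamma'}$, then $\gamma=\gamma'$ on every edge of $E$.
   Context: $D=\{x\in\mathbb Z^d: 1\le x_i\le n \text{ for all } i\}$ and $\partial D=\{p\in\mathbb Z^d:\min_{q\in D}\|q-p\|_{\ell^1}=1\}$ (the points with exactly one coordinate in $\{0,n+1\}$ and all others in $\{1,\dots,n\}$). $E$ is the set of unordered pairs $pq=\{p,q\}\subseteq D\cup\partial D$ with $\|p-q\|_{\ell^1}=1$ and $\{p,q\}\not\subseteq\partial D$. Write $\mathcal N(p)=\{q:pq\in E\}$; each $b\in\partial D$ has exactly one neighbour $q_b$, and $q_b\in D$. A conductivity is a map $\gamma:E\to(0,\infty)$, $\gamma_{pq}=\gamma_{qp}$. For $\mathbf u\in\mathbb R^{D\cup\partial D}$ set $(\Delta_\gamma\mathbf u)_p=\sum_{q\in\mathcal N(p)}\gamma_{pq}(\mathbf u_q-\mathbf u_p)$ for $p\in D$. For every $\varphi\in\mathbb R^{\partial D}$ there is a unique $\mathbf u$ with $\Delta_\gamma\mathbf u=0$ on $D$ and $\mathbf u=\varphi$ on $\partial D$; write $S_\gamma\varphi=\mathbf u$. The boundary current is $(D_\gamma\mathbf u)_b=\gamma_{bq_b}(\mathbf u_{q_b}-\mathbf u_b)$ for $b\in\partial D$, and the DtN matrix is $\Lambda_\gamma=D_\gamma\circ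 S_\gamma:\mathbb R^{\partial D}\to\mathbb R^{\partial D}$. *)

theory Defs
  imports Complex_Main "HOL-Library.FuncSet"
begin

text \<open>Lattice points of Z^d are represented as integer lists of length d.\<close>

definition l1dist :: "int list \<Rightarrow> int list \<Rightarrow> int" where
  "l1dist p q = (\<Sum>i<length p. \<bar>p ! i - q ! i\<bar>)"

definition Dom :: "nat \<Rightarrow> nat \<Rightarrow> int list set" where
  "Dom d n = {x. length x = d \<and> (\<forall>i<d. 1 \<le> x ! i \<and> x ! i \<le> int n)}"

definition Bdry :: "nat \<Rightarrow> nat \<Rightarrow> int list set" where
  "Bdry d n = {p. length p = d \<and> (\<exists>q\<in>Dom d n. l1dist p q = 1) \<and>
                               (\<forall>q\<in>Dom d n. 1 \<le> l1dist p q)}"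

definition Edges :: "nat \<Rightarrow> nat \<Rightarrow> int list set set" where
  "Edges d n = {{p, q} | p q. p \<in> Dom d n \<union> Bdry d n \<and> q \<in> Dom d n \<union> Bdry d n \<and>
                  l1dist p q = 1 \<and> \<not> ({p, q} \<subseteq> Bdry d n)}"

definition Nbr :: "nat \<Rightarrow> nat \<Rightarrow> int list \<Rightarrow> int list set" where
  "Nbr d n p = {q. {p, q} \<in> Edges d n}"

text \<open>Conductivities are maps from (unordered) edges to reals; positivity is assumed separately.\<close>

definition harmonic :: "nat \<Rightarrow> nat \<Rightarrow> (int list set \<Rightarrow> real) \<Rightarrow> (int list \<Rightarrow> real) \<Rightarrow> bool" where
  "harmonic d n \<gamma> u \<longleftrightarrow>
     (\<forall>p\<in>Dom d n. (\<Sum>q\<in>Nbr d n p. \<gamma> {p, q} * (u q - u p)) = 0)"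

definition harm_ext :: "nat \<Rightarrow> nat \<Rightarrow> (int list set \<Rightarrow> real) \<Rightarrow> (int list \<Rightarrow> real) \<Rightarrow> (int list \<Rightarrow> real)" where
  "harm_ext d n \<gamma> \<phi> = (THE u. u \<in> extensional (Dom d n \<union> Bdry d n) \<and>
        harmonic d n \<gamma> u \<and> (\<forall>b\<in>Bdry d n. u b = \<phi> b))"

definition bnbr :: "nat \<Rightarrow> nat \<Rightarrow> int list \<Rightarrow> int list" where
  "bnbr d n b = (THE q. q \<in> Nbr d n b)"

definition current :: "nat \<Rightarrow> nat \<Rightarrow> (int list set \<Rightarrow> real) \<Rightarrow> (int list \<Rightarrow> real) \<Rightarrow> (int list \<Rightarrow> real)" where
  "current d n \<gamma> u = (\<lambda>b. if b \<in> Bdry d n then \<gamma> {b, bnbr d n b} * (u (bnbr d n b) - u b) else 0)"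

text \<open>DtN map: phi (only its values on dD matter) to boundary currents (extensional outside dD).\<close>
definition DtN :: "nat \<Rightarrow> nat \<Rightarrow> (int list set \<Rightarrow> real) \<Rightarrow> (int list \<Rightarrow> real) \<Rightarrow> (int list \<Rightarrow> real)" where
  "DtN d n \<gamma> \<phi> = current d n \<gamma> (harm_ext d n \<gamma> \<phi>)"

end

theory Submission
  imports Defs
begin
definition boxS :: "nat \<Rightarrow> (nat \<Rightarrow> int) \<Rightarrow> (nat \<Rightarrow> int) \<Rightarrow> int list set" where
  "boxS d lo hi = {x. length x = d \<and> (\<forall>i<d. lo i \<le> x!i \<and> x!i \<le> hi i)}"

definition bdS :: "nat \<Rightarrow> (nat \<Rightarrow> int) \<Rightarrow> (nat \<Rightarrow> int) \<Rightarrow> int list set" where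
  "bdS d lo hi = {x. length x = d \<and> (\<exists>i<d. (x!i = lo i - 1 \<or> x!i = hi i + 1) \<and>
      (\<forall>l<d. l \<noteq> i \<longrightarrow> lo l \<le> x!l \<and> x!l \<le> hi l))}"

definition VS :: "nat \<Rightarrow> (nat \<Rightarrow> int) \<Rightarrow> (nat \<Rightarrow> int) \<Rightarrow> int list set" where
  "VS d lo hi = boxS d lo hi \<union> bdS d lo hi"

definition nb :: "int list \<Rightarrow> int list set" where
  "nb x = (\<lambda>(i,t). x[i := x!i + t]) ` ({..<length x} \<times> {1, -1})"

lemma nb_mem: "y \<in> nb x \<longleftrightarrow> (\<exists>i t. i < length x \<and> (t = 1 \<or> t = -1) \<and> y = x[i := x!i + t])"
  unfolding nb_def by force

lemma finite_nb: "finite (nb x)"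
  unfolding nb_def by auto

lemma nb_length: "y \<in> nb x \<Longrightarrow> length y = length x"
  by (auto simp: nb_mem)

lemma nb_sym: "y \<in> nb x \<Longrightarrow> x \<in> nb y"
proof -
  assume "y \<in> nb x"
  then obtain i t where i: "i < length x" "t = 1 \<or> t = -1" "y = x[i := x!i + t]" by (auto simp: nb_mem)
  have "x = y[i := y!i + (-t)]" using i by auto
  moreover have "-t = 1 \<or> -t = -1" using i by auto
  ultimately show ?thesis using i unfolding nb_mem by (metis length_list_update)
qed

lemma nb_neq: "y \<in> nb x \<Longrightarrow> y \<noteq> x"
proof
  assume "y \<in> nb x" "y = x"
  then obtain i t where i: "i < length x" "t = 1 \<or> t = -1" "y = x[i := x!i + t]" by (auto simp: nb_mem)
  then have "y!i = x!i + t" by auto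
  with \<open>y = x\<close> i show False by auto
qed

lemma nb_coord: "y \<in> nb x \<Longrightarrow> \<bar>x!j - y!j\<bar> \<le> 1"
proof -
  assume "y \<in> nb x"
  then obtain i t where i: "i < length x" "t = 1 \<or> t = -1" "y = x[i := x!i + t]" by (auto simp: nb_mem)
  show ?thesis using i by (cases "i = j") auto
qed

lemma VS_range: "x \<in> VS d lo hi \<Longrightarrow> i < d \<Longrightarrow> \<bar>x!i\<bar> \<le> \<bar>lo i\<bar> + \<bar>hi i\<bar> + 1"
proof -
  assume x: "x \<in> VS d lo hi" and i: "i < d"
  show ?thesis
  proof (cases "x \<in> boxS d lo hi")
    case True then show ?thesis using i by (force simp: boxS_def)
  next
    case False
    then have "x \<in> bdS d lo hi" using x by (auto simp: VS_def)
    then obtain i0 where "i0 < d" "x!i0 = lo i0 - 1 \<or> x!i0 = hi i0 + 1"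
      "\<forall>l<d. l \<noteq> i0 \<longrightarrow> lo l \<le> x!l \<and> x!l \<le> hi l" by (auto simp: bdS_def)
    then show ?thesis using i by (cases "i = i0") auto
  qed
qed

lemma finite_VS: "finite (VS d lo hi)"
proof -
  define S where "S = (\<Sum>i<d. \<bar>lo i\<bar> + \<bar>hi i\<bar>) + 1"
  have "VS d lo hi \<subseteq> {xs. set xs \<subseteq> {-S..S} \<and> length xs = d}"
  proof
    fix x assume x: "x \<in> VS d lo hi"
    have len: "length x = d" using x by (auto simp: VS_def boxS_def bdS_def)
    have "set x \<subseteq> {-S..S}"
    proof
      fix a assume "a \<in> set x"
      then obtain i where i: "i < d" "a = x!i" using len by (auto simp: in_set_conv_nth)
      have "\<bar>lo i\<bar> + \<bar>hi i\<bar> \<le> (\<Sum>i<d. \<bar>lo i\<bar> + \<bar>hi i\<bar>)"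
        by (rule member_le_sum) (use i in auto)
      then show "a \<in> {-S..S}" using VS_range[OF x i(1)] i unfolding S_def by auto
    qed
    then show "x \<in> {xs. set xs \<subseteq> {-S..S} \<and> length xs = d}" using len by auto
  qed
  moreover have "finite {xs. set xs \<subseteq> {-S..S} \<and> length xs = d}"
    by (rule finite_lists_length_eq) auto
  ultimately show ?thesis by (rule finite_subset)
qed

lemma box_bd_disj: "x \<in> boxS d lo hi \<Longrightarrow> x \<notin> bdS d lo hi"
  unfolding boxS_def bdS_def by force

lemma box_nb: assumes "x \<in> boxS d lo hi" "y \<in> nb x"
  shows "y \<in> boxS d lo hi \<or> y \<in> bdS d lo hi"
proof -
  obtain i t where i: "i < length x" "t = 1 \<or> t = -1" "y = x[i := x!i + t]"
    using assms(2) by (auto simp: nb_mem)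
  have len: "length x = d" "length y = d" using assms(1) i by (auto simp: boxS_def)
  have oth: "\<forall>l<d. l \<noteq> i \<longrightarrow> lo l \<le> y!l \<and> y!l \<le> hi l" using assms(1) i by (auto simp: boxS_def)
  have xi: "lo i \<le> x!i" "x!i \<le> hi i" using assms(1) i len by (auto simp: boxS_def)
  have yi: "y!i = x!i + t" using i by auto
  show ?thesis
  proof (cases "lo i \<le> y!i \<and> y!i \<le> hi i")
    case True
    have "\<forall>l<d. lo l \<le> y!l \<and> y!l \<le> hi l"
    proof (intro allI impI)
      fix l assume "l < d"
      then show "lo l \<le> y!l \<and> y!l \<le> hi l" using oth True by (cases "l = i") auto
    qed
    then show ?thesis using len by (auto simp: boxS_def)
  next
    case False
    then have "y!i = lo i - 1 \<or> y!i = hi i + 1" using xi yi i(2) by auto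
    then show ?thesis using oth len i(1) unfolding bdS_def by auto
  qed
qed

lemma bd_elim: assumes "b \<in> bdS d lo hi"
  obtains i where "i < d" "b!i = lo i - 1 \<or> b!i = hi i + 1"
    "\<forall>l<d. l \<noteq> i \<longrightarrow> lo l \<le> b!l \<and> b!l \<le> hi l" "length b = d"
  using assms unfolding bdS_def by auto

lemma bd_nb_box_form: assumes "b \<in> bdS d lo hi" "i < d" "b!i < lo i \<or> hi i < b!i"
  "q \<in> nb b" "q \<in> boxS d lo hi"
  shows "\<exists>t. (t = 1 \<or> t = -1) \<and> q = b[i := b!i + t]"
proof -
  obtain l t where l: "l < length b" "t = 1 \<or> t = -1" "q = b[l := b!l + t]"
    using assms(4) by (auto simp: nb_mem)
  have "l = i"
  proof (rule ccontr)
    assume "l \<noteq> i"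
    then have "q!i = b!i" using l by auto
    moreover have "lo i \<le> q!i \<and> q!i \<le> hi i" using assms(5,2) by (auto simp: boxS_def)
    ultimately show False using assms(3) by auto
  qed
  then show ?thesis using l by auto
qed

lemma bd_nb_box_other: assumes "b \<in> bdS d lo hi" "i < d" "b!i < lo i \<or> hi i < b!i"
  "q \<in> nb b" "q \<in> boxS d lo hi" "j \<noteq> i"
  shows "q!j = b!j"
  using bd_nb_box_form[OF assms(1-5)] assms(6) by auto

lemma bd_out: assumes "b \<in> bdS d lo hi" "\<forall>i<d. lo i \<le> hi i"
  obtains i where "i < d" "b!i < lo i \<or> hi i < b!i" "b!i = lo i - 1 \<or> b!i = hi i + 1"
    "\<forall>l<d. l \<noteq> i \<longrightarrow> lo l \<le> b!l \<and> b!l \<le> hi l" "length b = d"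
proof -
  obtain i where i: "i < d" "b!i = lo i - 1 \<or> b!i = hi i + 1"
    "\<forall>l<d. l \<noteq> i \<longrightarrow> lo l \<le> b!l \<and> b!l \<le> hi l" "length b = d"
    using assms(1) by (elim bd_elim) blast
  then have "b!i < lo i \<or> hi i < b!i" by auto
  then show ?thesis using that i by blast
qed

lemma bd_unique: assumes "b \<in> bdS d lo hi" "\<forall>i<d. lo i \<le> hi i"
  "q1 \<in> nb b" "q1 \<in> boxS d lo hi" "q2 \<in> nb b" "q2 \<in> boxS d lo hi"
  shows "q1 = q2"
proof -
  obtain i where i: "i < d" "b!i < lo i \<or> hi i < b!i" "b!i = lo i - 1 \<or> b!i = hi i + 1"
    "\<forall>l<d. l \<noteq> i \<longrightarrow> lo l \<le> b!l \<and> b!l \<le> hi l" "length b = d"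
    using bd_out[OF assms(1,2)] by blast
  obtain t1 where t1: "t1 = 1 \<or> t1 = -1" "q1 = b[i := b!i + t1]"
    using bd_nb_box_form[OF assms(1) i(1,2) assms(3,4)] by auto
  obtain t2 where t2: "t2 = 1 \<or> t2 = -1" "q2 = b[i := b!i + t2]"
    using bd_nb_box_form[OF assms(1) i(1,2) assms(5,6)] by auto
  have "q1!i = b!i + t1" "q2!i = b!i + t2" using t1 t2 i by auto
  moreover have "lo i \<le> q1!i \<and> q1!i \<le> hi i" "lo i \<le> q2!i \<and> q2!i \<le> hi i"
    using assms(4,6) i by (auto simp: boxS_def)
  ultimately have "t1 = t2" using t1(1) t2(1) i(3) by force
  then show ?thesis using t1 t2 by simp
qed

lemma bd_exists: assumes "b \<in> bdS d lo hi" "\<forall>i<d. lo i \<le> hi i"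
  shows "\<exists>q. q \<in> nb b \<and> q \<in> boxS d lo hi"
proof -
  obtain i where i: "i < d" "b!i < lo i \<or> hi i < b!i" "b!i = lo i - 1 \<or> b!i = hi i + 1"
    "\<forall>l<d. l \<noteq> i \<longrightarrow> lo l \<le> b!l \<and> b!l \<le> hi l" "length b = d"
    using bd_out[OF assms(1,2)] by blast
  define t where "t = (if b!i = lo i - 1 then (1::int) else -1)"
  define q where "q = b[i := b!i + t]"
  have "q \<in> nb b" unfolding nb_mem
  proof (intro exI conjI)
    show "i < length b" using i by simp
    show "t = 1 \<or> t = -1" by (simp add: t_def)
    show "q = b[i := b!i + t]" by (simp add: q_def)
  qed
  moreover have "q \<in> boxS d lo hi"
    unfolding boxS_def q_def using i assms(2) by (auto simp: t_def nth_list_update)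
  ultimately show ?thesis by blast
qed

definition cw :: "nat \<Rightarrow> (nat \<Rightarrow> int) \<Rightarrow> (nat \<Rightarrow> int) \<Rightarrow> (int list set \<Rightarrow> real) \<Rightarrow> int list \<Rightarrow> int list \<Rightarrow> real" where
  "cw d lo hi \<gamma> x y = (if y \<in> nb x \<and> (x \<in> boxS d lo hi \<or> y \<in> boxS d lo hi) then \<gamma> {x,y} else 0)"

definition hN :: "(int list set \<Rightarrow> real) \<Rightarrow> (int list \<Rightarrow> real) \<Rightarrow> int list \<Rightarrow> real" where
  "hN \<gamma> u x = (\<Sum>y\<in>nb x. \<gamma> {x,y} * (u y - u x))"

definition harm :: "nat \<Rightarrow> (nat \<Rightarrow> int) \<Rightarrow> (nat \<Rightarrow> int) \<Rightarrow> (int list set \<Rightarrow> real) \<Rightarrow> (int list \<Rightarrow> real) \<Rightarrow> bool" where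
  "harm d lo hi \<gamma> u = (\<forall>x\<in>boxS d lo hi. (\<Sum>y\<in>VS d lo hi. cw d lo hi \<gamma> x y * (u y - u x)) = 0)"

definition JJ :: "nat \<Rightarrow> (nat \<Rightarrow> int) \<Rightarrow> (nat \<Rightarrow> int) \<Rightarrow> (int list set \<Rightarrow> real) \<Rightarrow> (int list \<Rightarrow> real) \<Rightarrow> int list \<Rightarrow> real" where
  "JJ d lo hi \<gamma> u b = (\<Sum>y\<in>VS d lo hi. cw d lo hi \<gamma> b y * (u y - u b))"

definition Rel :: "nat \<Rightarrow> (nat \<Rightarrow> int) \<Rightarrow> (nat \<Rightarrow> int) \<Rightarrow> (int list set \<Rightarrow> real) \<Rightarrow> (int list set \<Rightarrow> real) \<Rightarrow> bool" where
  "Rel d lo hi \<gamma> \<gamma>' = (\<forall>u. harm d lo hi \<gamma> u \<longrightarrow> (\<exists>u'. harm d lo hi \<gamma>' u' \<and>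
      (\<forall>b\<in>bdS d lo hi. u' b = u b \<and> JJ d lo hi \<gamma>' u' b = JJ d lo hi \<gamma> u b)))"

definition posc :: "nat \<Rightarrow> (nat \<Rightarrow> int) \<Rightarrow> (nat \<Rightarrow> int) \<Rightarrow> (int list set \<Rightarrow> real) \<Rightarrow> bool" where
  "posc d lo hi \<gamma> = (\<forall>x y. y \<in> nb x \<and> (x \<in> boxS d lo hi \<or> y \<in> boxS d lo hi) \<longrightarrow> 0 < \<gamma> {x,y})"

lemma cw_sym: "cw d lo hi \<gamma> x y = cw d lo hi \<gamma> y x"
  unfolding cw_def using nb_sym by (auto simp: insert_commute)

lemma cw_nonneg: "posc d lo hi \<gamma> \<Longrightarrow> 0 \<le> cw d lo hi \<gamma> x y"
  unfolding cw_def posc_def by (auto intro: less_imp_le)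

lemma nb_box_VS: "x \<in> boxS d lo hi \<Longrightarrow> nb x \<subseteq> VS d lo hi"
  using box_nb unfolding VS_def by blast

lemma sum_cw_box: assumes "x \<in> boxS d lo hi"
  shows "(\<Sum>y\<in>VS d lo hi. cw d lo hi \<gamma> x y * f y) = (\<Sum>y\<in>nb x. \<gamma> {x,y} * f y)"
proof (rule sum.mono_neutral_cong_right)
  show "finite (VS d lo hi)" by (rule finite_VS)
  show "nb x \<subseteq> VS d lo hi" using nb_box_VS[OF assms] .
  show "\<forall>i\<in>VS d lo hi - nb x. cw d lo hi \<gamma> x i * f i = 0" by (auto simp: cw_def)
  show "\<And>y. y \<in> nb x \<Longrightarrow> cw d lo hi \<gamma> x y * f y = \<gamma> {x, y} * f y" using assms by (auto simp: cw_def)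
qed

lemma harm_iff: "harm d lo hi \<gamma> u \<longleftrightarrow> (\<forall>x\<in>boxS d lo hi. hN \<gamma> u x = 0)"
  unfolding harm_def hN_def by (simp add: sum_cw_box)

lemma JJ_single: assumes "b \<in> bdS d lo hi" "\<forall>i<d. lo i \<le> hi i" "q \<in> nb b" "q \<in> boxS d lo hi"
  shows "JJ d lo hi \<gamma> u b = \<gamma> {b,q} * (u q - u b)"
  unfolding JJ_def
proof (rule sum.mono_neutral_cong_right[where S = "{q}", simplified])
  show "finite (VS d lo hi)" by (rule finite_VS)
  show "q \<in> VS d lo hi" using assms(4) by (auto simp: VS_def)
  have bnot: "b \<notin> boxS d lo hi" using assms(1) box_bd_disj by blast
  show "\<forall>i\<in>VS d lo hi - {q}. cw d lo hi \<gamma> b i * (u i - u b) = 0"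
    using bd_unique[OF assms(1,2,3,4)] bnot by (auto simp: cw_def)
  show "cw d lo hi \<gamma> b q * (u q - u b) = \<gamma> {b, q} * (u q - u b)" using assms(3,4) by (auto simp: cw_def)
qed

lemma dirichlet_exists:
  fixes I :: "'a set"
  assumes "finite I"
  shows "\<And>V (c :: 'a \<Rightarrow> 'a \<Rightarrow> real) \<phi>. finite V \<Longrightarrow> I \<subseteq> V \<Longrightarrow> (\<forall>x y. c x y = c y x) \<Longrightarrow> (\<forall>x y. 0 \<le> c x y) \<Longrightarrow>
     \<exists>u. (\<forall>p\<in>I. (\<Sum>q\<in>V. c p q * (u q - u p)) = 0) \<and> (\<forall>b\<in>V - I. u b = \<phi> b)"
  using assms
proof (induction I rule: finite_induct)
  case empty
  show ?case by (intro exI[of _ \<phi>]) auto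
next
  case (insert p I)
  define V0 where "V0 = V - {p}"
  define s where "s = (\<Sum>q\<in>V0. c p q)"
  define c' where "c' = (\<lambda>r q. c r q + c r p * c p q / s)"
  have fV0: "finite V0" using insert by (simp add: V0_def)
  have IV0: "I \<subseteq> V0" using insert by (auto simp: V0_def)
  have pV: "p \<in> V" using insert by auto
  have s0: "0 \<le> s" unfolding s_def using insert.prems(4) by (simp add: sum_nonneg)
  have c'sym: "\<forall>x y. c' x y = c' y x" using insert.prems(3) by (simp add: c'_def)
  have c'nn: "\<forall>x y. 0 \<le> c' x y" using insert.prems(4) s0 by (simp add: c'_def)
  obtain u0 where u0: "\<forall>r\<in>I. (\<Sum>q\<in>V0. c' r q * (u0 q - u0 r)) = 0" "\<forall>b\<in>V0 - I. u0 b = \<phi> b"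
    using insert(3)[OF fV0 IV0 c'sym c'nn] by blast
  define up where "up = (\<Sum>q\<in>V0. c p q * u0 q) / s"
  define u where "u = u0(p := up)"
  have zc: "s = 0 \<Longrightarrow> \<forall>q\<in>V0. c p q = 0"
    using sum_nonneg_eq_0_iff[OF fV0] insert.prems(4) unfolding s_def by blast
  have split: "(\<Sum>q\<in>V. f q) = f p + (\<Sum>q\<in>V0. f q)" for f :: "'a \<Rightarrow> real"
    unfolding V0_def using insert.prems(1) pV by (simp add: sum.remove)
  have uV0: "\<And>q. q \<in> V0 \<Longrightarrow> u q = u0 q" by (auto simp: u_def V0_def)
  have hp: "(\<Sum>q\<in>V. c p q * (u q - u p)) = 0"
  proof -
    have "(\<Sum>q\<in>V. c p q * (u q - u p)) = (\<Sum>q\<in>V0. c p q * (u0 q - up))"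
      using split uV0 by (simp add: u_def)
    also have "\<dots> = (\<Sum>q\<in>V0. c p q * u0 q) - s * up"
      by (simp add: s_def algebra_simps sum_subtractf sum_distrib_right sum_distrib_left)
    also have "\<dots> = 0"
    proof (cases "s = 0")
      case True
      then show ?thesis using zc by simp
    next
      case False
      then show ?thesis by (simp add: up_def)
    qed
    finally show ?thesis .
  qed
  have hr: "(\<Sum>q\<in>V. c r q * (u q - u r)) = 0" if r: "r \<in> I" for r
  proof -
    have rV0: "r \<in> V0" using r IV0 by auto
    have rp: "r \<noteq> p" using r insert(2) by auto
    have key: "c r p * (up - u0 r) = (\<Sum>q\<in>V0. (c r p * c p q / s) * (u0 q - u0 r))"
    proof (cases "s = 0")
      case True
      then have "c p r = 0" using zc rV0 by auto
      then have "c r p = 0" using insert.prems(3) by metis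
      then show ?thesis by simp
    next
      case False
      have "(\<Sum>q\<in>V0. (c r p * c p q / s) * (u0 q - u0 r)) = c r p / s * (\<Sum>q\<in>V0. c p q * (u0 q - u0 r))"
        unfolding sum_distrib_left by (rule sum.cong) (use False in \<open>auto simp: field_simps\<close>)
      also have "(\<Sum>q\<in>V0. c p q * (u0 q - u0 r)) = (\<Sum>q\<in>V0. c p q * u0 q) - s * u0 r"
        by (simp add: s_def algebra_simps sum_subtractf sum_distrib_right sum_distrib_left)
      also have "(\<Sum>q\<in>V0. c p q * u0 q) = s * up" using False by (simp add: up_def)
      finally have E: "(\<Sum>q\<in>V0. (c r p * c p q / s) * (u0 q - u0 r)) = c r p / s * (s * up - s * u0 r)" .
      show ?thesis unfolding E using False by (simp add: field_simps)
    qed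
    have "(\<Sum>q\<in>V. c r q * (u q - u r)) = c r p * (up - u0 r) + (\<Sum>q\<in>V0. c r q * (u0 q - u0 r))"
      using split uV0 rp rV0 by (simp add: u_def)
    also have "\<dots> = (\<Sum>q\<in>V0. c' r q * (u0 q - u0 r))"
      unfolding key c'_def by (simp add: sum.distrib[symmetric] algebra_simps)
    also have "\<dots> = 0" using u0(1) r by blast
    finally show ?thesis .
  qed
  have hb: "\<forall>b\<in>V - insert p I. u b = \<phi> b"
    using u0(2) by (auto simp: u_def V0_def)
  show ?case
    by (intro exI[of _ u]) (use hp hr hb in auto)
qed

lemma green:
  fixes c :: "'a \<Rightarrow> 'a \<Rightarrow> real"
  assumes fin: "finite V" and IV: "I \<subseteq> V" and sym: "\<forall>x y. c x y = c y x"
    and h: "\<forall>p\<in>I. (\<Sum>q\<in>V. c p q * (u q - u p)) = 0"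
  shows "(\<Sum>p\<in>V. \<Sum>q\<in>V. c p q * (u p - u q) * (w p - w q)) =
         -2 * (\<Sum>b\<in>V - I. w b * (\<Sum>q\<in>V. c b q * (u q - u b)))"
proof -
  define A where "A = (\<Sum>p\<in>V. \<Sum>q\<in>V. c p q * (u p - u q) * w p)"
  define B where "B = (\<Sum>p\<in>V. \<Sum>q\<in>V. c p q * (u p - u q) * w q)"
  have "(\<Sum>p\<in>V. \<Sum>q\<in>V. c p q * (u p - u q) * (w p - w q)) = A - B"
    unfolding A_def B_def by (simp add: sum_subtractf[symmetric] algebra_simps)
  moreover have "B = (\<Sum>q\<in>V. \<Sum>p\<in>V. c p q * (u p - u q) * w q)"
    unfolding B_def by (rule sum.swap)
  moreover have "(\<Sum>q\<in>V. \<Sum>p\<in>V. c p q * (u p - u q) * w q) = - A"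
    unfolding A_def by (simp add: sum_negf[symmetric] sym algebra_simps)
  ultimately have L: "(\<Sum>p\<in>V. \<Sum>q\<in>V. c p q * (u p - u q) * (w p - w q)) = 2 * A" by simp
  have "A = (\<Sum>p\<in>V. - (w p * (\<Sum>q\<in>V. c p q * (u q - u p))))"
    unfolding A_def by (simp add: sum_distrib_left sum_negf[symmetric] algebra_simps)
  also have "\<dots> = (\<Sum>p\<in>I. - (w p * (\<Sum>q\<in>V. c p q * (u q - u p)))) + (\<Sum>p\<in>V - I. - (w p * (\<Sum>q\<in>V. c p q * (u q - u p))))"
    by (subst sum.subset_diff[OF IV fin]) (simp add: add.commute)
  also have "(\<Sum>p\<in>I. - (w p * (\<Sum>q\<in>V. c p q * (u q - u p)))) = 0" using h by simp
  finally have "A = - (\<Sum>b\<in>V - I. w b * (\<Sum>q\<in>V. c b q * (u q - u b)))" by (simp add: sum_negf)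
  then show ?thesis using L by simp
qed

lemma VS_minus_box: "VS d lo hi - boxS d lo hi = bdS d lo hi"
  unfolding VS_def using box_bd_disj by blast

lemma box_sub_VS: "boxS d lo hi \<subseteq> VS d lo hi"
  unfolding VS_def by blast

lemma green_box:
  assumes "harm d lo hi \<gamma> u"
  shows "(\<Sum>p\<in>VS d lo hi. \<Sum>q\<in>VS d lo hi. cw d lo hi \<gamma> p q * (u p - u q) * (w p - w q)) =
         -2 * (\<Sum>b\<in>bdS d lo hi. w b * JJ d lo hi \<gamma> u b)"
proof -
  have "(\<Sum>p\<in>VS d lo hi. \<Sum>q\<in>VS d lo hi. cw d lo hi \<gamma> p q * (u p - u q) * (w p - w q)) =
         -2 * (\<Sum>b\<in>VS d lo hi - boxS d lo hi. w b * (\<Sum>q\<in>VS d lo hi. cw d lo hi \<gamma> b q * (u q - u b)))"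
    by (rule green[OF finite_VS box_sub_VS]) (use cw_sym assms in \<open>auto simp: harm_def\<close>)
  then show ?thesis unfolding VS_minus_box JJ_def .
qed

lemma alessandrini:
  assumes R: "Rel d lo hi \<gamma> \<gamma>'" and hu: "harm d lo hi \<gamma> u" and hv: "harm d lo hi \<gamma>' v"
  shows "(\<Sum>p\<in>VS d lo hi. \<Sum>q\<in>VS d lo hi. (cw d lo hi \<gamma> p q - cw d lo hi \<gamma>' p q) * (u p - u q) * (v p - v q)) = 0"
proof -
  obtain u' where u': "harm d lo hi \<gamma>' u'" "\<forall>b\<in>bdS d lo hi. u' b = u b \<and> JJ d lo hi \<gamma>' u' b = JJ d lo hi \<gamma> u b"
    using R hu unfolding Rel_def by blast
  define G where "G = (\<lambda>c a b. (\<Sum>p\<in>VS d lo hi. \<Sum>q\<in>VS d lo hi. cw d lo hi c p q * (a p - a q) * (b p - b q)))"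
  have Gsym: "G c a b = G c b a" for c a b unfolding G_def by (simp add: algebra_simps)
  have "G \<gamma> u v = -2 * (\<Sum>b\<in>bdS d lo hi. v b * JJ d lo hi \<gamma> u b)"
    unfolding G_def by (rule green_box[OF hu])
  also have "\<dots> = -2 * (\<Sum>b\<in>bdS d lo hi. v b * JJ d lo hi \<gamma>' u' b)"
    using u'(2) by simp
  also have "\<dots> = G \<gamma>' u' v"
    unfolding G_def by (rule green_box[OF u'(1), symmetric])
  also have "\<dots> = G \<gamma>' v u'" by (rule Gsym)
  also have "\<dots> = -2 * (\<Sum>b\<in>bdS d lo hi. u' b * JJ d lo hi \<gamma>' v b)"
    unfolding G_def by (rule green_box[OF hv])
  also have "\<dots> = -2 * (\<Sum>b\<in>bdS d lo hi. u b * JJ d lo hi \<gamma>' v b)"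
    using u'(2) by simp
  also have "\<dots> = G \<gamma>' v u"
    unfolding G_def by (rule green_box[OF hv, symmetric])
  also have "\<dots> = G \<gamma>' u v" by (rule Gsym)
  finally have E: "G \<gamma> u v = G \<gamma>' u v" .
  have "(\<Sum>p\<in>VS d lo hi. \<Sum>q\<in>VS d lo hi. (cw d lo hi \<gamma> p q - cw d lo hi \<gamma>' p q) * (u p - u q) * (v p - v q))
        = G \<gamma> u v - G \<gamma>' u v"
    unfolding G_def by (simp add: sum_subtractf[symmetric] algebra_simps)
  then show ?thesis using E by simp
qed

lemma uniq_box:
  assumes pos: "posc d lo hi \<gamma>" and d0: "0 < d" and hw: "harm d lo hi \<gamma> w"
    and bw: "\<forall>b\<in>bdS d lo hi. w b = 0"
  shows "\<forall>x\<in>boxS d lo hi. w x = 0"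
proof -
  have "(\<Sum>p\<in>VS d lo hi. \<Sum>q\<in>VS d lo hi. cw d lo hi \<gamma> p q * (w p - w q) * (w p - w q)) = 0"
    using green_box[OF hw, of w] bw by simp
  then have Z: "\<forall>p\<in>VS d lo hi. \<forall>q\<in>VS d lo hi. cw d lo hi \<gamma> p q * (w p - w q) * (w p - w q) = 0"
  proof -
    assume S: "(\<Sum>p\<in>VS d lo hi. \<Sum>q\<in>VS d lo hi. cw d lo hi \<gamma> p q * (w p - w q) * (w p - w q)) = 0"
    have nn: "\<And>p q. 0 \<le> cw d lo hi \<gamma> p q * (w p - w q) * (w p - w q)"
      using cw_nonneg[OF pos] by (simp add: mult.assoc)
    have "\<forall>p\<in>VS d lo hi. (\<Sum>q\<in>VS d lo hi. cw d lo hi \<gamma> p q * (w p - w q) * (w p - w q)) = 0"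
      using S by (subst (asm) sum_nonneg_eq_0_iff[OF finite_VS]) (auto intro: sum_nonneg nn)
    then show ?thesis by (subst (asm) sum_nonneg_eq_0_iff[OF finite_VS]) (auto intro: nn)
  qed
  have step: "w x = w (x[0 := x!0 - 1])" if x: "x \<in> boxS d lo hi" for x
  proof -
    define y where "y = x[0 := x!0 + (-1)]"
    have len: "length x = d" using x by (simp add: boxS_def)
    have yn: "y \<in> nb x" unfolding nb_mem y_def using len d0 by blast
    have yV: "y \<in> VS d lo hi" using nb_box_VS[OF x] yn by blast
    have xV: "x \<in> VS d lo hi" using x box_sub_VS by blast
    have "cw d lo hi \<gamma> x y = \<gamma> {x,y}" using yn x by (simp add: cw_def)
    moreover have "0 < \<gamma> {x,y}" using pos yn x unfolding posc_def by blast
    ultimately have "w x - w y = 0" using Z[rule_format, OF xV yV] by auto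
    then show ?thesis by (simp add: y_def)
  qed
  have "\<forall>x\<in>boxS d lo hi. x!0 - lo 0 = int m \<longrightarrow> w x = 0" for m
  proof (induction m)
    case 0
    show ?case
    proof (intro ballI impI)
      fix x assume x: "x \<in> boxS d lo hi" and e: "x!0 - lo 0 = int 0"
      define y where "y = x[0 := x!0 + (-1)]"
      have len: "length x = d" using x by (simp add: boxS_def)
      have yn: "y \<in> nb x" unfolding nb_mem y_def using len d0 by blast
      have "y!0 = lo 0 - 1" using e len d0 by (simp add: y_def)
      then have "y \<notin> boxS d lo hi" using d0 by (auto simp: boxS_def)
      then have "y \<in> bdS d lo hi" using box_nb[OF x yn] by blast
      then show "w x = 0" using step[OF x] bw by (simp add: y_def)
    qed
  next
    case (Suc m)
    show ?case
    proof (intro ballI impI)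
      fix x assume x: "x \<in> boxS d lo hi" and e: "x!0 - lo 0 = int (Suc m)"
      define y where "y = x[0 := x!0 - 1]"
      have len: "length x = d" using x by (simp add: boxS_def)
      have y: "y \<in> boxS d lo hi" unfolding boxS_def
      proof (rule CollectI, rule conjI)
        show "length y = d" using len by (simp add: y_def)
        show "\<forall>i<d. lo i \<le> y!i \<and> y!i \<le> hi i"
        proof (intro allI impI)
        fix i assume i: "i < d"
        show "lo i \<le> y!i \<and> y!i \<le> hi i"
        proof (cases "i = 0")
          case True
          then have "y!i = x!0 - 1" using len d0 by (simp add: y_def)
          then show ?thesis using x e True d0 unfolding boxS_def by force
        next
          case False
          then have "y!i = x!i" by (simp add: y_def)
          then show ?thesis using x i unfolding boxS_def by force
        qed
        qed
      qed
      have "y!0 - lo 0 = int m" using e len d0 by (simp add: y_def)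
      then have "w y = 0" using Suc y by blast
      then show "w x = 0" using step[OF x] by (simp add: y_def)
    qed
  qed
  note M = this
  show ?thesis
  proof
    fix x assume x: "x \<in> boxS d lo hi"
    then have "lo 0 \<le> x!0" using d0 unfolding boxS_def by blast
    then have "x!0 - lo 0 = int (nat (x!0 - lo 0))" by simp
    then show "w x = 0" using M x by blast
  qed
qed

primrec marchU :: "(int list set \<Rightarrow> real) \<Rightarrow> int list set \<Rightarrow> nat \<Rightarrow> int \<Rightarrow> int \<Rightarrow> (int list \<Rightarrow> real) \<Rightarrow> nat \<Rightarrow> int list \<Rightarrow> real" where
  "marchU \<gamma> Bx j s k g 0 = g"
| "marchU \<gamma> Bx j s k g (Suc m) = (\<lambda>p. if s * p!j = k + 1 + int m \<and> p[j := p!j - s] \<in> Bx then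
      marchU \<gamma> Bx j s k g m (p[j := p!j - s]) -
        (\<Sum>y\<in>nb (p[j := p!j - s]) - {p}. \<gamma> {p[j := p!j - s], y} *
            (marchU \<gamma> Bx j s k g m y - marchU \<gamma> Bx j s k g m (p[j := p!j - s]))) / \<gamma> {p[j := p!j - s], p}
    else marchU \<gamma> Bx j s k g m p)"

lemma level_nb: assumes "y \<in> nb x" "s = 1 \<or> s = -1" shows "s * y!j \<le> s * x!j + 1"
proof -
  have "\<bar>x!j - y!j\<bar> \<le> 1" using nb_coord[OF assms(1)] .
  then show ?thesis using assms(2) by auto
qed

lemma march:
  assumes j: "j < d" and s: "s = 1 \<or> s = -1" and pos: "posc d lo hi \<gamma>"
    and hg: "\<forall>x\<in>boxS d lo hi. s * x!j < k \<longrightarrow> hN \<gamma> g x = 0"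
  shows "\<exists>u. (\<forall>x\<in>boxS d lo hi. hN \<gamma> u x = 0) \<and> (\<forall>p. s * p!j \<le> k \<longrightarrow> u p = g p) \<and>
             (\<forall>p. p[j := p!j - s] \<notin> boxS d lo hi \<longrightarrow> u p = g p)"
proof -
  define B where "B = boxS d lo hi"
  define U where "U = marchU \<gamma> B j s k g"
  have ss: "s * s = 1" using s by auto
  have unch: "U (Suc m) p = U m p" if "\<not> (s * p!j = k + 1 + int m \<and> p[j := p!j - s] \<in> B)" for m p
    using that unfolding U_def by (simp only: marchU.simps if_False)
  have I1: "U m p = g p" if "s * p!j \<le> k" for m p
    using that by (induction m) (auto simp: U_def)
  have I2: "U m p = g p" if "p[j := p!j - s] \<notin> B" for m p
    using that by (induction m) (auto simp: U_def)
  have I3: "\<forall>x\<in>B. s * x!j < k + int m \<longrightarrow> hN \<gamma> (U m) x = 0" for m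
  proof (induction m)
    case 0
    then show ?case using hg by (simp add: U_def B_def)
  next
    case (Suc m)
    show ?case
    proof (intro ballI impI)
      fix x assume x: "x \<in> B" and lx: "s * x!j < k + int (Suc m)"
      have len: "length x = d" using x by (simp add: B_def boxS_def)
      show "hN \<gamma> (U (Suc m)) x = 0"
      proof (cases "s * x!j < k + int m")
        case True
        have "U (Suc m) y = U m y" if "y \<in> nb x" for y
          using level_nb[OF that s, of j] True by (intro unch) auto
        moreover have "U (Suc m) x = U m x" using True by (intro unch) auto
        ultimately have "hN \<gamma> (U (Suc m)) x = hN \<gamma> (U m) x" unfolding hN_def by simp
        then show ?thesis using Suc x True by simp
      next
        case False
        then have lev: "s * x!j = k + int m" using lx by simp
        define p where "p = x[j := x!j + s]"
        have pj: "p!j = x!j + s" using len j by (simp add: p_def)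
        have lp: "s * p!j = k + 1 + int m" using pj lev ss by (simp add: algebra_simps)
        have px: "p[j := p!j - s] = x" using pj by (simp add: p_def)
        have pn: "p \<in> nb x" unfolding nb_mem p_def using len j s by blast
        define S where "S = (\<Sum>y\<in>nb x - {p}. \<gamma> {x, y} * (U m y - U m x))"
        have Up: "U (Suc m) p = U m x - S / \<gamma> {x, p}"
          using lp px x by (simp add: U_def S_def)
        have oth: "U (Suc m) y = U m y" if y: "y \<in> nb x - {p}" for y
        proof -
          obtain i t where it: "i < length x" "t = 1 \<or> t = -1" "y = x[i := x!i + t]"
            using y by (auto simp: nb_mem)
          have "s * y!j \<le> k + int m"
          proof (cases "i = j")
            case True
            then have "t \<noteq> s" using y it by (auto simp: p_def)
            then have "t = - s" using it(2) s by auto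
            then show ?thesis using True it lev ss by (simp add: algebra_simps)
          next
            case False
            then show ?thesis using it lev by simp
          qed
          then show ?thesis by (intro unch) auto
        qed
        have Ux: "U (Suc m) x = U m x" using lev by (intro unch) auto
        have gp: "0 < \<gamma> {x, p}" using pos pn x unfolding posc_def B_def by blast
        have "hN \<gamma> (U (Suc m)) x = \<gamma> {x, p} * (U (Suc m) p - U (Suc m) x) +
               (\<Sum>y\<in>nb x - {p}. \<gamma> {x, y} * (U (Suc m) y - U (Suc m) x))"
          unfolding hN_def using pn finite_nb by (simp add: sum.remove)
        also have "(\<Sum>y\<in>nb x - {p}. \<gamma> {x, y} * (U (Suc m) y - U (Suc m) x)) = S"
          unfolding S_def Ux using oth by simp
        also have "\<gamma> {x, p} * (U (Suc m) p - U (Suc m) x) = - S"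
          using gp unfolding Up Ux by (simp add: field_simps)
        finally show ?thesis by simp
      qed
    qed
  qed
  define M where "M = nat (\<bar>lo j\<bar> + \<bar>hi j\<bar> + 1 - k)"
  have all: "s * x!j < k + int M" if x: "x \<in> B" for x
  proof -
    have "lo j \<le> x!j" "x!j \<le> hi j" using x j by (auto simp: B_def boxS_def)
    then have "s * x!j \<le> \<bar>lo j\<bar> + \<bar>hi j\<bar>" using s by auto
    moreover have "\<bar>lo j\<bar> + \<bar>hi j\<bar> + 1 - k \<le> int M" unfolding M_def by simp
    ultimately show ?thesis by simp
  qed
  show ?thesis
    by (rule exI[of _ "U M"]) (use I1 I2 I3[of M] all in \<open>auto simp: B_def\<close>)
qed

lemma sum2:
  fixes F :: "'a \<Rightarrow> 'a \<Rightarrow> real"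
  assumes fin: "finite V" and a: "a \<in> V" and b: "b \<in> V" and ab: "a \<noteq> b"
    and nz: "\<forall>p\<in>V. \<forall>q\<in>V. F p q \<noteq> 0 \<longrightarrow> (p = a \<and> q = b) \<or> (p = b \<and> q = a)"
  shows "(\<Sum>p\<in>V. \<Sum>q\<in>V. F p q) = F a b + F b a"
proof -
  have inner: "(\<Sum>q\<in>V. F p q) = (if p = a then F a b else if p = b then F b a else 0)" if p: "p \<in> V" for p
  proof (cases "p = a")
    case True
    have "(\<Sum>q\<in>V. F p q) = (\<Sum>q\<in>{b}. F p q)"
      by (rule sum.mono_neutral_right) (use fin b nz p True ab in auto)
    then show ?thesis using True by simp
  next
    case False
    show ?thesis
    proof (cases "p = b")
      case True
      have "(\<Sum>q\<in>V. F p q) = (\<Sum>q\<in>{a}. F p q)"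
        by (rule sum.mono_neutral_right) (use fin a nz p True ab in auto)
      then show ?thesis using True ab by simp
    next
      case False2: False
      have "(\<Sum>q\<in>V. F p q) = 0" by (rule sum.neutral) (use nz p False False2 in auto)
      then show ?thesis using False False2 by simp
    qed
  qed
  have "(\<Sum>p\<in>V. \<Sum>q\<in>V. F p q) = (\<Sum>p\<in>V. (if p = a then F a b else if p = b then F b a else 0))"
    using inner by simp
  also have "\<dots> = (\<Sum>p\<in>{a,b}. (if p = a then F a b else if p = b then F b a else 0))"
    by (rule sum.mono_neutral_right) (use fin a b in auto)
  also have "\<dots> = F a b + F b a" using ab by simp
  finally show ?thesis .
qed

lemma hN_delta: assumes "x \<noteq> b" "b \<notin> nb x"
  shows "hN \<gamma> (\<lambda>p. if p = b then 1 else 0) x = 0"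
  unfolding hN_def using assms by (intro sum.neutral) auto

lemma cw_diff: "cw d lo hi \<gamma> p q \<noteq> cw d lo hi \<gamma>' p q \<Longrightarrow>
   q \<in> nb p \<and> (p \<in> boxS d lo hi \<or> q \<in> boxS d lo hi) \<and> \<gamma> {p,q} \<noteq> \<gamma>' {p,q}"
  unfolding cw_def by (auto split: if_splits)

lemma spike:
  assumes d2: "2 \<le> d" and lohi: "\<forall>i<d. lo i \<le> hi i"
    and pos: "posc d lo hi \<gamma>" and pos': "posc d lo hi \<gamma>'" and R: "Rel d lo hi \<gamma> \<gamma>'"
    and b: "b \<in> bdS d lo hi" and q: "q \<in> nb b" "q \<in> boxS d lo hi"
  shows "\<gamma> {b,q} = \<gamma>' {b,q}"
proof -
  obtain i where i: "i < d" "b!i < lo i \<or> hi i < b!i" "length b = d"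
    using bd_out[OF b lohi] by blast
  define j where "j = (if i = 0 then 1 else (0::nat))"
  have j: "j < d" "j \<noteq> i" using d2 by (auto simp: j_def)
  define k where "k = b!j"
  define g where "g = (\<lambda>p. if p = b then 1 else (0::real))"
  have bnot: "b \<notin> boxS d lo hi" using b box_bd_disj by blast
  have uq: "\<And>z. z \<in> nb b \<Longrightarrow> z \<in> boxS d lo hi \<Longrightarrow> z = q" using bd_unique[OF b lohi] q by blast
  have qj: "q!j = k" unfolding k_def by (rule bd_nb_box_other[OF b i(1,2) q j(2)])
  have qb: "q \<noteq> b" using q bnot by blast
  have hgen: "hN \<gamma>0 g x = 0" if x: "x \<in> boxS d lo hi" "x!j \<noteq> k" for x \<gamma>0
  proof -
    have "x \<noteq> b" using x bnot by blast
    moreover have "b \<notin> nb x" using uq[OF nb_sym] x qj by blast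
    ultimately show ?thesis unfolding g_def by (rule hN_delta)
  qed
  obtain u where u: "\<forall>x\<in>boxS d lo hi. hN \<gamma> u x = 0" "\<forall>p. 1 * p!j \<le> k \<longrightarrow> u p = g p"
    using march[OF j(1) _ pos, of 1 k g] hgen by force
  obtain v where v: "\<forall>x\<in>boxS d lo hi. hN \<gamma>' v x = 0" "\<forall>p. -1 * p!j \<le> -k \<longrightarrow> v p = g p"
    using march[OF j(1) _ pos', of "-1" "-k" g] hgen by force
  have hu: "harm d lo hi \<gamma> u" using u(1) harm_iff by blast
  have hv: "harm d lo hi \<gamma>' v" using v(1) harm_iff by blast
  define F where "F = (\<lambda>p q. (cw d lo hi \<gamma> p q - cw d lo hi \<gamma>' p q) * (u p - u q) * (v p - v q))"
  have A: "(\<Sum>p\<in>VS d lo hi. \<Sum>q\<in>VS d lo hi. F p q) = 0"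
    unfolding F_def by (rule alessandrini[OF R hu hv])
  have nz: "\<forall>p\<in>VS d lo hi. \<forall>r\<in>VS d lo hi. F p r \<noteq> 0 \<longrightarrow> (p = b \<and> r = q) \<or> (p = q \<and> r = b)"
  proof (intro ballI impI)
    fix p r assume "F p r \<noteq> 0"
    then have c: "cw d lo hi \<gamma> p r \<noteq> cw d lo hi \<gamma>' p r" and du: "u p \<noteq> u r" and dv: "v p \<noteq> v r"
      unfolding F_def by auto
    from cw_diff[OF c] have rp: "r \<in> nb p" and box: "p \<in> boxS d lo hi \<or> r \<in> boxS d lo hi" by auto
    show "(p = b \<and> r = q) \<or> (p = q \<and> r = b)"
    proof (cases "p = b \<or> r = b")
      case True
      then show ?thesis
      proof
        assume "p = b"
        then show ?thesis using uq rp box bnot by blast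
      next
        assume "r = b"
        then show ?thesis using uq nb_sym[OF rp] box bnot by blast
      qed
    next
      case False
      have "p!j > k \<or> r!j > k"
      proof (rule ccontr)
        assume "\<not> ?thesis"
        then have "u p = 0" "u r = 0" using u(2) False by (auto simp: g_def)
        then show False using du by simp
      qed
      moreover have "p!j < k \<or> r!j < k"
      proof (rule ccontr)
        assume "\<not> ?thesis"
        then have "v p = 0" "v r = 0" using v(2) False by (auto simp: g_def)
        then show False using dv by simp
      qed
      moreover have "\<bar>p!j - r!j\<bar> \<le> 1" using nb_coord[OF rp] .
      ultimately show ?thesis by auto
    qed
  qed
  have bV: "b \<in> VS d lo hi" using b by (simp add: VS_def)
  have qV: "q \<in> VS d lo hi" using q by (simp add: VS_def)
  have "(\<Sum>p\<in>VS d lo hi. \<Sum>r\<in>VS d lo hi. F p r) = F b q + F q b"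
    by (rule sum2[OF finite_VS bV qV qb[symmetric] nz])
  moreover have "u b = 1" "v b = 1" "u q = 0" "v q = 0"
    using u(2) v(2) qj qb by (auto simp: g_def k_def)
  moreover have "cw d lo hi \<gamma> b q = \<gamma> {b,q}" "cw d lo hi \<gamma>' b q = \<gamma>' {b,q}"
    "cw d lo hi \<gamma> q b = \<gamma> {b,q}" "cw d lo hi \<gamma>' q b = \<gamma>' {b,q}"
    using q nb_sym[OF q(1)] by (auto simp: cw_def insert_commute)
  ultimately have "2 * (\<gamma> {b,q} - \<gamma>' {b,q}) = 0" using A unfolding F_def by simp
  then show ?thesis by simp
qed

lemma nb_level_other:
  assumes s: "s = 1 \<or> s = -1" and w: "w \<in> nb z" and wp: "w \<noteq> z[l := z!l + s]"
  shows "s * w!l \<le> s * z!l"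
proof -
  obtain i t where it: "i < length z" "t = 1 \<or> t = -1" "w = z[i := z!i + t]"
    using w by (auto simp: nb_mem)
  show ?thesis
  proof (cases "i = l")
    case True
    then have "t \<noteq> s" using wp it by auto
    then have "t = - s" using it(2) s by auto
    then show ?thesis using True it s by auto
  next
    case False
    then show ?thesis using it by simp
  qed
qed

lemma cone:
  assumes s: "s = 1 \<or> s = -1" and l: "l < d" and pos: "posc d lo hi \<gamma>"
    and x0: "x0 \<in> boxS d lo hi" and c0: "c0 \<in> bdS d lo hi"
    and x0c: "x0 \<in> nb c0" and uc: "\<And>z. z \<in> nb c0 \<Longrightarrow> z \<in> boxS d lo hi \<Longrightarrow> z = x0"
    and c0l: "c0!l = x0!l"
    and y0: "y0 = x0[l := x0!l + s]" "y0 \<in> boxS d lo hi"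
    and hu: "\<forall>x\<in>boxS d lo hi. hN \<gamma> u x = 0"
    and ug: "\<forall>p. s * p!l \<le> s * x0!l \<longrightarrow> u p = (if p = c0 then 1 else 0)"
  shows "\<forall>p\<in>boxS d lo hi. s * p!l = s * x0!l + 1 \<longrightarrow> p \<noteq> y0 \<longrightarrow> u p = 0"
    and "u y0 \<noteq> 0"
proof -
  have ss: "s * s = 1" using s by auto
  have c0nb: "c0 \<notin> boxS d lo hi" using c0 box_bd_disj by blast
  have len0: "length x0 = d" using x0 by (simp add: boxS_def)
  have zero_nb: "u w = 0" if z: "z \<in> boxS d lo hi" "s * z!l = s * x0!l" "z \<noteq> x0"
      and w: "w \<in> nb z" "w \<noteq> z[l := z!l + s]" for z w
  proof -
    have "s * w!l \<le> s * z!l" by (rule nb_level_other[OF s w])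
    moreover have "w \<noteq> c0" using uc[OF nb_sym] w z by blast
    ultimately show ?thesis using ug z by auto
  qed
  show "\<forall>p\<in>boxS d lo hi. s * p!l = s * x0!l + 1 \<longrightarrow> p \<noteq> y0 \<longrightarrow> u p = 0"
  proof (intro ballI impI)
    fix p assume p: "p \<in> boxS d lo hi" "s * p!l = s * x0!l + 1" "p \<noteq> y0"
    have lenp: "length p = d" using p by (simp add: boxS_def)
    define z where "z = p[l := p!l - s]"
    have zl: "z!l = x0!l"
    proof -
      have "z!l = p!l - s" using lenp l by (simp add: z_def)
      then show ?thesis using p(2) s by auto
    qed
    have zbox: "z \<in> boxS d lo hi" unfolding boxS_def
    proof (rule CollectI, rule conjI)
      show "length z = d" using lenp by (simp add: z_def)
      show "\<forall>i<d. lo i \<le> z!i \<and> z!i \<le> hi i"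
      proof (intro allI impI)
        fix i assume i: "i < d"
        show "lo i \<le> z!i \<and> z!i \<le> hi i"
        proof (cases "i = l")
          case True then show ?thesis using zl x0 i unfolding boxS_def by auto
        next
          case False
          then have "z!i = p!i" by (simp add: z_def)
          then show ?thesis using p(1) i unfolding boxS_def by auto
        qed
      qed
    qed
    have pz: "p = z[l := z!l + s]" using lenp l by (simp add: z_def)
    have pnb: "p \<in> nb z" unfolding nb_mem
    proof (intro exI conjI)
      show "l < length z" using lenp l by (simp add: z_def)
      show "s = 1 \<or> s = -1" using s .
      show "p = z[l := z!l + s]" using pz .
    qed
    have zx: "z \<noteq> x0"
    proof
      assume "z = x0"
      then have "p = x0[l := x0!l + s]" using pz by simp
      then show False using p(3) y0(1) by simp
    qed
    have zl': "s * z!l = s * x0!l" using zl by simp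
    have uz: "u z = 0" using ug zl' zx zbox c0nb by auto
    have "0 = hN \<gamma> u z" using hu zbox by simp
    also have "\<dots> = \<gamma> {z,p} * (u p - u z) + (\<Sum>w\<in>nb z - {p}. \<gamma> {z,w} * (u w - u z))"
      unfolding hN_def using pnb finite_nb by (simp add: sum.remove)
    also have "(\<Sum>w\<in>nb z - {p}. \<gamma> {z,w} * (u w - u z)) = 0"
      using zero_nb[OF zbox zl' zx] pz uz by (intro sum.neutral) auto
    finally have "\<gamma> {z,p} * u p = 0" using uz by simp
    moreover have "0 < \<gamma> {z,p}" using pos pnb zbox unfolding posc_def by blast
    ultimately show "u p = 0" by simp
  qed
  show "u y0 \<noteq> 0"
  proof
    assume uy: "u y0 = 0"
    have y0nb: "y0 \<in> nb x0" unfolding nb_mem using y0(1) len0 l s by auto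
    have c0x: "c0 \<in> nb x0" using nb_sym[OF x0c] .
    have yc: "y0 \<noteq> c0" using y0(2) c0nb by blast
    have ux: "u x0 = 0" using ug x0 c0nb by auto
    have uc0: "u c0 = 1" using ug c0l by auto
    have "0 = hN \<gamma> u x0" using hu x0 by simp
    also have "\<dots> = \<gamma> {x0,y0} * (u y0 - u x0) + (\<Sum>w\<in>nb x0 - {y0}. \<gamma> {x0,w} * (u w - u x0))"
      unfolding hN_def using y0nb finite_nb by (simp add: sum.remove)
    also have "(\<Sum>w\<in>nb x0 - {y0}. \<gamma> {x0,w} * (u w - u x0)) =
        \<gamma> {x0,c0} * (u c0 - u x0) + (\<Sum>w\<in>nb x0 - {y0} - {c0}. \<gamma> {x0,w} * (u w - u x0))"
      by (subst sum.remove[of "nb x0 - {y0}" c0]) (use c0x yc finite_nb in auto)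
    also have "(\<Sum>w\<in>nb x0 - {y0} - {c0}. \<gamma> {x0,w} * (u w - u x0)) = 0"
    proof (rule sum.neutral, rule ballI)
      fix w assume w: "w \<in> nb x0 - {y0} - {c0}"
      have "s * w!l \<le> s * x0!l" using nb_level_other[OF s, of w x0 l] w y0(1) by auto
      then show "\<gamma> {x0,w} * (u w - u x0) = 0" using ug w ux by auto
    qed
    finally have "\<gamma> {x0,c0} = 0" using uy ux uc0 by simp
    moreover have "0 < \<gamma> {x0,c0}" using pos c0x x0 unfolding posc_def by blast
    ultimately show False by simp
  qed
qed

lemma face_bd: assumes z: "z \<in> boxS d lo hi" and d0: "0 < d"
  shows "z[0 := lo 0 - 1] \<in> bdS d lo hi"
proof -
  have len: "length z = d" using z by (simp add: boxS_def)
  show ?thesis unfolding bdS_def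
  proof (rule CollectI, rule conjI)
    show "length (z[0 := lo 0 - 1]) = d" using len by simp
    show "\<exists>i<d. (z[0 := lo 0 - 1]!i = lo i - 1 \<or> z[0 := lo 0 - 1]!i = hi i + 1) \<and>
        (\<forall>l<d. l \<noteq> i \<longrightarrow> lo l \<le> z[0 := lo 0 - 1]!l \<and> z[0 := lo 0 - 1]!l \<le> hi l)"
      using z d0 len unfolding boxS_def by (intro exI[of _ 0]) auto
  qed
qed

lemma face_nb: assumes z: "z \<in> boxS d lo hi" and d0: "0 < d" and z0: "z!0 = lo 0"
  shows "z \<in> nb (z[0 := lo 0 - 1])"
proof -
  have len: "length z = d" using z by (simp add: boxS_def)
  have "z = (z[0 := lo 0 - 1])[0 := (z[0 := lo 0 - 1])!0 + 1]" using len d0 z0 by (simp, metis list_update_id)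
  then show ?thesis unfolding nb_mem using len d0 by (metis length_list_update)
qed

lemma horiz:
  assumes d2: "2 \<le> d" and lohi: "\<forall>i<d. lo i \<le> hi i"
    and pos: "posc d lo hi \<gamma>" and pos': "posc d lo hi \<gamma>'" and R: "Rel d lo hi \<gamma> \<gamma>'"
    and sp: "\<forall>b z. b \<in> bdS d lo hi \<longrightarrow> z \<in> nb b \<longrightarrow> z \<in> boxS d lo hi \<longrightarrow> \<gamma> {b,z} = \<gamma>' {b,z}"
    and x: "x \<in> boxS d lo hi" "x!0 = lo 0" and l: "0 < l" "l < d"
    and y: "y = x[l := x!l + 1]" "y \<in> boxS d lo hi"
  shows "\<gamma> {x,y} = \<gamma>' {x,y}"
proof -
  have d0: "0 < d" using d2 by simp
  have len: "length x = d" using x by (simp add: boxS_def)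
  define k where "k = x!l"
  have yl: "y!l = k + 1" using y len l by (simp add: k_def)
  have y0: "y!0 = lo 0" using y x l by simp
  have xy: "x \<noteq> y" using yl k_def by auto
  define c where "c = x[0 := lo 0 - 1]"
  define c2 where "c2 = y[0 := lo 0 - 1]"
  have cb: "c \<in> bdS d lo hi" unfolding c_def by (rule face_bd[OF x(1) d0])
  have c2b: "c2 \<in> bdS d lo hi" unfolding c2_def by (rule face_bd[OF y(2) d0])
  have xc: "x \<in> nb c" unfolding c_def by (rule face_nb[OF x(1) d0 x(2)])
  have yc2: "y \<in> nb c2" unfolding c2_def by (rule face_nb[OF y(2) d0 y0])
  have uc: "\<And>z. z \<in> nb c \<Longrightarrow> z \<in> boxS d lo hi \<Longrightarrow> z = x"
    using bd_unique[OF cb lohi] xc x(1) by blast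
  have uc2: "\<And>z. z \<in> nb c2 \<Longrightarrow> z \<in> boxS d lo hi \<Longrightarrow> z = y"
    using bd_unique[OF c2b lohi] yc2 y(2) by blast
  have cnb: "c \<notin> boxS d lo hi" using cb box_bd_disj by blast
  have c2nb: "c2 \<notin> boxS d lo hi" using c2b box_bd_disj by blast
  have cl: "c!l = x!l" using l by (simp add: c_def)
  have c2l: "c2!l = y!l" using l by (simp add: c2_def)
  define g1 where "g1 = (\<lambda>p. if p = c then 1 else (0::real))"
  define g2 where "g2 = (\<lambda>p. if p = c2 then 1 else (0::real))"
  have h1: "hN \<gamma> g1 x' = 0" if "x' \<in> boxS d lo hi" "x'!l \<noteq> k" for x'
    unfolding g1_def using that cnb uc[OF nb_sym] k_def by (intro hN_delta) auto
  have h2: "hN \<gamma>' g2 x' = 0" if "x' \<in> boxS d lo hi" "x'!l \<noteq> k + 1" for x'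
    unfolding g2_def using that c2nb uc2[OF nb_sym] yl by (intro hN_delta) auto
  obtain u where u: "\<forall>x\<in>boxS d lo hi. hN \<gamma> u x = 0" "\<forall>p. 1 * p!l \<le> k \<longrightarrow> u p = g1 p"
    using march[OF l(2) _ pos, of 1 k g1] h1 by force
  obtain v where v: "\<forall>x\<in>boxS d lo hi. hN \<gamma>' v x = 0" "\<forall>p. -1 * p!l \<le> -(k+1) \<longrightarrow> v p = g2 p"
    using march[OF l(2) _ pos', of "-1" "-(k+1)" g2] h2 by force
  have ug: "\<forall>p. 1 * p!l \<le> 1 * x!l \<longrightarrow> u p = (if p = c then 1 else 0)"
    using u(2) unfolding g1_def k_def by simp
  have vg: "\<forall>p. -1 * p!l \<le> -1 * y!l \<longrightarrow> v p = (if p = c2 then 1 else 0)"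
    using v(2) yl unfolding g2_def by simp
  have xy': "x = y[l := y!l + -1]" using y len l by (simp add: k_def)
  note U = cone[of 1 l d lo hi \<gamma> x c y u, OF _ l(2) pos x(1) cb xc uc cl y u(1) ug]
  note V = cone[of "-1" l d lo hi \<gamma>' y c2 x v, OF _ l(2) pos' y(2) c2b yc2 uc2 c2l xy' x(1) v(1) vg]
  have Ubox: "u p \<noteq> 0 \<Longrightarrow> p = y \<or> k + 2 \<le> p!l" if p: "p \<in> boxS d lo hi" for p
  proof -
    assume "u p \<noteq> 0"
    moreover have "p!l \<le> k \<Longrightarrow> u p = 0" using ug p cnb k_def by auto
    moreover have "p!l = k + 1 \<Longrightarrow> p \<noteq> y \<Longrightarrow> u p = 0" using U(1) p k_def by auto
    ultimately show ?thesis by force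
  qed
  have Vbox: "v p \<noteq> 0 \<Longrightarrow> p = x \<or> p!l \<le> k - 1" if p: "p \<in> boxS d lo hi" for p
  proof -
    assume "v p \<noteq> 0"
    moreover have "k + 1 \<le> p!l \<Longrightarrow> v p = 0" using vg p c2nb yl by auto
    moreover have "p!l = k \<Longrightarrow> p \<noteq> x \<Longrightarrow> v p = 0" using V(1) p yl by auto
    ultimately show ?thesis by force
  qed
  have uy: "u y \<noteq> 0" using U(2) by simp
  have vx: "v x \<noteq> 0" using V(2) by simp
  have ux: "u x = 0" using ug cnb x(1) by auto
  have vy: "v y = 0" using vg c2nb y(2) by auto
  have hu: "harm d lo hi \<gamma> u" using u(1) harm_iff by blast
  have hv: "harm d lo hi \<gamma>' v" using v(1) harm_iff by blast
  define F where "F = (\<lambda>p q. (cw d lo hi \<gamma> p q - cw d lo hi \<gamma>' p q) * (u p - u q) * (v p - v q))"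
  have A: "(\<Sum>p\<in>VS d lo hi. \<Sum>q\<in>VS d lo hi. F p q) = 0"
    unfolding F_def by (rule alessandrini[OF R hu hv])
  have nz: "\<forall>p\<in>VS d lo hi. \<forall>r\<in>VS d lo hi. F p r \<noteq> 0 \<longrightarrow> (p = x \<and> r = y) \<or> (p = y \<and> r = x)"
  proof (intro ballI impI)
    fix p r assume "F p r \<noteq> 0"
    then have c: "cw d lo hi \<gamma> p r \<noteq> cw d lo hi \<gamma>' p r" and du: "u p \<noteq> u r" and dv: "v p \<noteq> v r"
      unfolding F_def by auto
    from cw_diff[OF c] have rp: "r \<in> nb p" and box: "p \<in> boxS d lo hi \<or> r \<in> boxS d lo hi"
      and gne: "\<gamma> {p,r} \<noteq> \<gamma>' {p,r}" by auto
    have pb: "p \<in> boxS d lo hi"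
    proof (rule ccontr)
      assume "p \<notin> boxS d lo hi"
      then have "r \<in> boxS d lo hi" "p \<in> bdS d lo hi" using box box_nb[of r d lo hi p] nb_sym[OF rp] by auto
      then show False using sp rp gne by blast
    qed
    have rb: "r \<in> boxS d lo hi"
    proof (rule ccontr)
      assume "r \<notin> boxS d lo hi"
      then have "r \<in> bdS d lo hi" using pb box_nb[OF pb rp] by auto
      then have "\<gamma> {r,p} = \<gamma>' {r,p}" using sp nb_sym[OF rp] pb by blast
      then show False using gne by (simp add: insert_commute)
    qed
    have pr: "p \<noteq> r" using nb_neq[OF rp] by auto
    have co: "\<bar>p!l - r!l\<bar> \<le> 1" using nb_coord[OF rp] .
    have "u p \<noteq> 0 \<or> u r \<noteq> 0" using du by auto
    then have a1: "p = y \<or> k + 2 \<le> p!l \<or> r = y \<or> k + 2 \<le> r!l" using Ubox pb rb by blast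
    have "v p \<noteq> 0 \<or> v r \<noteq> 0" using dv by auto
    then have a2: "p = x \<or> p!l \<le> k - 1 \<or> r = x \<or> r!l \<le> k - 1" using Vbox pb rb by blast
    have xl: "x!l = k" by (simp add: k_def)
    show "(p = x \<and> r = y) \<or> (p = y \<and> r = x)"
      using a1 a2 co pr xy xl yl by auto
  qed
  have xV: "x \<in> VS d lo hi" using x by (simp add: VS_def)
  have yV: "y \<in> VS d lo hi" using y by (simp add: VS_def)
  have yn: "y \<in> nb x" using nb_sym[OF nb_sym] y len l unfolding nb_mem by auto
  have "(\<Sum>p\<in>VS d lo hi. \<Sum>r\<in>VS d lo hi. F p r) = F x y + F y x"
    by (rule sum2[OF finite_VS xV yV xy nz])
  then have S0: "F x y + F y x = 0" using A by simp
  have "cw d lo hi \<gamma> x y = \<gamma> {x,y}" "cw d lo hi \<gamma>' x y = \<gamma>' {x,y}"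
    "cw d lo hi \<gamma> y x = \<gamma> {x,y}" "cw d lo hi \<gamma>' y x = \<gamma>' {x,y}"
    using yn nb_sym[OF yn] x(1) y(2) by (auto simp: cw_def insert_commute)
  note cws = this
  have "F x y + F y x = -2 * (\<gamma> {x,y} - \<gamma>' {x,y}) * (u y * v x)"
    unfolding F_def cws ux vy by (simp add: algebra_simps)
  then have "-2 * (\<gamma> {x,y} - \<gamma>' {x,y}) * (u y * v x) = 0" using S0 by simp
  then show ?thesis using uy vx by simp
qed

lemma box_peel: assumes d0: "0 < d"
  shows "p \<in> boxS d (lo(0 := lo 0 + 1)) hi \<longleftrightarrow> p \<in> boxS d lo hi \<and> lo 0 + 1 \<le> p!0"
proof
  assume p: "p \<in> boxS d (lo(0 := lo 0 + 1)) hi"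
  then have "lo 0 + 1 \<le> p!0" using d0 unfolding boxS_def by force
  moreover have "p \<in> boxS d lo hi" unfolding boxS_def
  proof (rule CollectI, rule conjI)
    show "length p = d" using p by (simp add: boxS_def)
    show "\<forall>i<d. lo i \<le> p!i \<and> p!i \<le> hi i"
    proof (intro allI impI)
      fix i assume i: "i < d"
      then have "(lo(0 := lo 0 + 1)) i \<le> p!i \<and> p!i \<le> hi i" using p by (simp add: boxS_def)
      then show "lo i \<le> p!i \<and> p!i \<le> hi i" by (cases "i = 0") auto
    qed
  qed
  ultimately show "p \<in> boxS d lo hi \<and> lo 0 + 1 \<le> p!0" by simp
next
  assume p: "p \<in> boxS d lo hi \<and> lo 0 + 1 \<le> p!0"
  show "p \<in> boxS d (lo(0 := lo 0 + 1)) hi" unfolding boxS_def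
  proof (rule CollectI, rule conjI)
    show "length p = d" using p by (simp add: boxS_def)
    show "\<forall>i<d. (lo(0 := lo 0 + 1)) i \<le> p!i \<and> p!i \<le> hi i"
    proof (intro allI impI)
      fix i assume i: "i < d"
      then have "lo i \<le> p!i \<and> p!i \<le> hi i" using p by (simp add: boxS_def)
      then show "(lo(0 := lo 0 + 1)) i \<le> p!i \<and> p!i \<le> hi i" using p by (cases "i = 0") auto
    qed
  qed
qed

lemma bd_peel: assumes d0: "0 < d" and lohi: "\<forall>i<d. lo i \<le> hi i" and p: "p \<in> bdS d (lo(0 := lo 0 + 1)) hi"
  shows "(p \<in> boxS d lo hi \<and> p!0 = lo 0) \<or> (p \<in> bdS d lo hi \<and> lo 0 + 1 \<le> p!0)"
proof -
  obtain i where i: "i < d" "p!i = (lo(0 := lo 0 + 1)) i - 1 \<or> p!i = hi i + 1"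
    "\<forall>l<d. l \<noteq> i \<longrightarrow> (lo(0 := lo 0 + 1)) l \<le> p!l \<and> p!l \<le> hi l" "length p = d"
    using p by (rule bd_elim)
  show ?thesis
  proof (cases "i = 0")
    case True
    show ?thesis
    proof (cases "p!0 = lo 0")
      case True2: True
      have "p \<in> boxS d lo hi" unfolding boxS_def
      proof (rule CollectI, rule conjI)
        show "length p = d" using i by simp
        show "\<forall>l<d. lo l \<le> p!l \<and> p!l \<le> hi l"
        proof (intro allI impI)
          fix l assume l: "l < d"
          show "lo l \<le> p!l \<and> p!l \<le> hi l"
          proof (cases "l = 0")
            case True then show ?thesis using True2 lohi d0 by auto
          next
            case False then show ?thesis using i(3) l True by auto
          qed
        qed
      qed
      then show ?thesis using True2 by simp
    next
      case False
      then have "p!0 = hi 0 + 1" using i True by auto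
      moreover have "p \<in> bdS d lo hi" unfolding bdS_def
        using i True calculation by (intro CollectI conjI exI[of _ 0]) (auto split: if_splits)
      ultimately show ?thesis using lohi d0 by simp
    qed
  next
    case False
    have r0: "lo 0 + 1 \<le> p!0" using i(3) False d0 by fastforce
    have "p \<in> bdS d lo hi" unfolding bdS_def
    proof (intro CollectI conjI exI[of _ i])
      show "length p = d" using i by simp
      show "i < d" using i by simp
      show "p!i = lo i - 1 \<or> p!i = hi i + 1" using i(2) False by simp
      show "\<forall>l<d. l \<noteq> i \<longrightarrow> lo l \<le> p!l \<and> p!l \<le> hi l"
      proof (intro allI impI)
        fix l assume "l < d" "l \<noteq> i"
        then have "(lo(0 := lo 0 + 1)) l \<le> p!l \<and> p!l \<le> hi l" using i(3) by blast
        then show "lo l \<le> p!l \<and> p!l \<le> hi l" by (cases "l = 0") auto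
      qed
    qed
    then show ?thesis using r0 by simp
  qed
qed

lemma VS_peel_level: assumes d0: "0 < d" and lohi: "\<forall>i<d. lo i \<le> hi i"
  and p: "p \<in> VS d (lo(0 := lo 0 + 1)) hi" shows "lo 0 \<le> p!0"
proof (cases "p \<in> boxS d (lo(0 := lo 0 + 1)) hi")
  case True then show ?thesis using box_peel[OF d0] by force
next
  case False
  then have "p \<in> bdS d (lo(0 := lo 0 + 1)) hi" using p by (simp add: VS_def)
  from bd_peel[OF d0 lohi this] show ?thesis unfolding boxS_def using d0 by force
qed

lemma peel:
  assumes d2: "2 \<le> d" and lohi: "\<forall>i<d. lo i \<le> hi i" and lt: "lo 0 < hi 0"
    and pos: "posc d lo hi \<gamma>" and pos': "posc d lo hi \<gamma>'" and R: "Rel d lo hi \<gamma> \<gamma>'"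
    and sp: "\<forall>b z. b \<in> bdS d lo hi \<longrightarrow> z \<in> nb b \<longrightarrow> z \<in> boxS d lo hi \<longrightarrow> \<gamma> {b,z} = \<gamma>' {b,z}"
    and hz: "\<forall>p q. p \<in> boxS d lo hi \<longrightarrow> q \<in> boxS d lo hi \<longrightarrow> p!0 = lo 0 \<longrightarrow> q!0 = lo 0 \<longrightarrow> q \<in> nb p
              \<longrightarrow> \<gamma> {p,q} = \<gamma>' {p,q}"
  shows "Rel d (lo(0 := lo 0 + 1)) hi \<gamma> \<gamma>'"
  unfolding Rel_def
proof (intro allI impI)
  define lo' where "lo' = lo(0 := lo 0 + 1)"
  have d0: "0 < d" using d2 by simp
  have lohi': "\<forall>i<d. lo' i \<le> hi i" using lohi lt by (auto simp: lo'_def)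
  have bp: "p \<in> boxS d lo' hi \<longleftrightarrow> p \<in> boxS d lo hi \<and> lo 0 + 1 \<le> p!0" for p
    unfolding lo'_def by (rule box_peel[OF d0])
  fix u assume hu: "harm d (lo(0 := lo 0 + 1)) hi \<gamma> u"
  then have hu': "\<forall>x\<in>boxS d lo' hi. hN \<gamma> u x = 0" using harm_iff unfolding lo'_def by blast
  define g where "g = (\<lambda>p. if p \<in> VS d lo' hi then u p else 0)"
  have hg: "\<forall>x\<in>boxS d lo hi. -1 * x!0 < - lo 0 \<longrightarrow> hN \<gamma> g x = 0"
  proof (intro ballI impI)
    fix x assume x: "x \<in> boxS d lo hi" "-1 * x!0 < - lo 0"
    then have xb': "x \<in> boxS d lo' hi" using bp by auto
    have "hN \<gamma> g x = hN \<gamma> u x"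
    proof -
      have xV: "x \<in> VS d lo' hi" using xb' by (simp add: VS_def)
      show ?thesis
        unfolding hN_def g_def using nb_box_VS[OF xb'] xV by (intro sum.cong) auto
    qed
    then show "hN \<gamma> g x = 0" using hu' xb' by simp
  qed
  obtain U where U: "\<forall>x\<in>boxS d lo hi. hN \<gamma> U x = 0" "\<forall>p. -1 * p!0 \<le> - lo 0 \<longrightarrow> U p = g p"
    using march[OF d0 _ pos, of "-1" "- lo 0" g] hg by force
  have UV: "U p = u p" if "p \<in> VS d lo' hi" for p
    using U(2) VS_peel_level[OF d0 lohi, of p] that by (simp add: g_def lo'_def)
  have hU: "harm d lo hi \<gamma> U" using U(1) harm_iff by blast
  obtain W where W: "harm d lo hi \<gamma>' W" "\<forall>b\<in>bdS d lo hi. W b = U b \<and> JJ d lo hi \<gamma>' W b = JJ d lo hi \<gamma> U b"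
    using R hU unfolding Rel_def by blast
  have hW: "\<forall>x\<in>boxS d lo hi. hN \<gamma>' W x = 0" using W(1) harm_iff by blast
  have claimA: "W z = U z" if z: "z \<in> boxS d lo hi" "z!0 = lo 0" for z
  proof -
    define b where "b = z[0 := lo 0 - 1]"
    have bb: "b \<in> bdS d lo hi" unfolding b_def by (rule face_bd[OF z(1) d0])
    have zb: "z \<in> nb b" unfolding b_def by (rule face_nb[OF z(1) d0 z(2)])
    have "JJ d lo hi \<gamma> U b = \<gamma> {b,z} * (U z - U b)" by (rule JJ_single[OF bb lohi zb z(1)])
    moreover have "JJ d lo hi \<gamma>' W b = \<gamma>' {b,z} * (W z - W b)" by (rule JJ_single[OF bb lohi zb z(1)])
    moreover have "\<gamma> {b,z} = \<gamma>' {b,z}" using sp bb zb z(1) by blast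
    moreover have "0 < \<gamma> {b,z}" using pos zb z(1) unfolding posc_def by blast
    ultimately show ?thesis using W(2) bb by auto
  qed
  have WU: "W p = U p" if "p \<in> bdS d lo hi \<or> (p \<in> boxS d lo hi \<and> p!0 = lo 0)" for p
    using that W(2) claimA by blast
  show "\<exists>u'. harm d (lo(0 := lo 0 + 1)) hi \<gamma>' u' \<and>
          (\<forall>b\<in>bdS d (lo(0 := lo 0 + 1)) hi. u' b = u b \<and>
             JJ d (lo(0 := lo 0 + 1)) hi \<gamma>' u' b = JJ d (lo(0 := lo 0 + 1)) hi \<gamma> u b)"
  proof (intro exI conjI ballI)
    show "harm d (lo(0 := lo 0 + 1)) hi \<gamma>' W"
      unfolding harm_iff using hW bp unfolding lo'_def by blast
    fix b assume b: "b \<in> bdS d (lo(0 := lo 0 + 1)) hi"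
    have bV: "b \<in> VS d lo' hi" using b by (simp add: VS_def lo'_def)
    note bc = bd_peel[OF d0 lohi b]
    show "W b = u b" using bc WU UV[OF bV] by metis
    show "JJ d (lo(0 := lo 0 + 1)) hi \<gamma>' W b = JJ d (lo(0 := lo 0 + 1)) hi \<gamma> u b"
    proof (cases "b \<in> boxS d lo hi \<and> b!0 = lo 0")
      case True
      have lenb: "length b = d" using True by (simp add: boxS_def)
      define bp where "bp = b[0 := b!0 + 1]"
      have bpn: "bp \<in> nb b" unfolding nb_mem bp_def using lenb d0 by blast
      have bp0: "bp!0 = lo 0 + 1" using True lenb d0 by (simp add: bp_def)
      have bpb: "bp \<in> boxS d lo hi"
      proof -
        have "bp \<in> boxS d lo hi \<or> bp \<in> bdS d lo hi" using box_nb True bpn by blast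
        moreover have "bp \<notin> bdS d lo hi"
        proof
          assume "bp \<in> bdS d lo hi"
          then obtain i where i: "i < d" "bp!i < lo i \<or> hi i < bp!i" using bd_out[OF _ lohi] by blast
          show False
          proof (cases "i = 0")
            case True then show ?thesis using i bp0 lt by auto
          next
            case False
            then have "bp!i = b!i" by (simp add: bp_def)
            then show ?thesis using i True unfolding boxS_def by auto
          qed
        qed
        ultimately show ?thesis by blast
      qed
      have bpb': "bp \<in> boxS d lo' hi" using bp bpb bp0 by simp
      have bpV: "bp \<in> VS d lo' hi" using bpb' by (simp add: VS_def)
      have J1: "JJ d lo' hi \<gamma> u b = \<gamma> {b,bp} * (u bp - u b)"
        by (rule JJ_single[OF b[folded lo'_def] lohi' bpn bpb'])
      have J2: "JJ d lo' hi \<gamma>' W b = \<gamma>' {b,bp} * (W bp - W b)"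
        by (rule JJ_single[OF b[folded lo'_def] lohi' bpn bpb'])
      have oth: "W w = U w \<and> \<gamma> {b,w} = \<gamma>' {b,w}" if w: "w \<in> nb b - {bp}" for w
      proof -
        have wl: "1 * w!0 \<le> 1 * b!0" using nb_level_other[of 1 w b 0] w by (auto simp: bp_def)
        have "w \<in> boxS d lo hi \<or> w \<in> bdS d lo hi" using box_nb True w by blast
        then show ?thesis
        proof
          assume wb: "w \<in> boxS d lo hi"
          then have "w!0 = lo 0" using wl True d0 unfolding boxS_def by force
          then show ?thesis using WU hz wb True w by blast
        next
          assume wd: "w \<in> bdS d lo hi"
          have "\<gamma> {w,b} = \<gamma>' {w,b}" using sp wd nb_sym w True by blast
          then show ?thesis using WU wd by (simp add: insert_commute)
        qed
      qed
      have e1: "\<gamma> {b,bp} * (U bp - U b) = - (\<Sum>w\<in>nb b - {bp}. \<gamma> {b,w} * (U w - U b))"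
      proof -
        have "0 = hN \<gamma> U b" using U(1) True by simp
        also have "\<dots> = \<gamma> {b,bp} * (U bp - U b) + (\<Sum>w\<in>nb b - {bp}. \<gamma> {b,w} * (U w - U b))"
          unfolding hN_def using bpn finite_nb by (simp add: sum.remove)
        finally show ?thesis by simp
      qed
      have e2: "\<gamma>' {b,bp} * (W bp - W b) = - (\<Sum>w\<in>nb b - {bp}. \<gamma>' {b,w} * (W w - W b))"
      proof -
        have "0 = hN \<gamma>' W b" using hW True by simp
        also have "\<dots> = \<gamma>' {b,bp} * (W bp - W b) + (\<Sum>w\<in>nb b - {bp}. \<gamma>' {b,w} * (W w - W b))"
          unfolding hN_def using bpn finite_nb by (simp add: sum.remove)
        finally show ?thesis by simp
      qed
      have Wb: "W b = U b" using WU True by blast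
      have "(\<Sum>w\<in>nb b - {bp}. \<gamma>' {b,w} * (W w - W b)) = (\<Sum>w\<in>nb b - {bp}. \<gamma> {b,w} * (U w - U b))"
        using oth Wb by (intro sum.cong) auto
      then have "\<gamma>' {b,bp} * (W bp - W b) = \<gamma> {b,bp} * (U bp - U b)" using e1 e2 by simp
      moreover have "U bp = u bp" "U b = u b" using UV bpV bV by auto
      ultimately show ?thesis using J1 J2 unfolding lo'_def by simp
    next
      case False
      then have bd: "b \<in> bdS d lo hi" and b0: "lo 0 + 1 \<le> b!0" using bc by auto
      obtain q where q: "q \<in> nb b" "q \<in> boxS d lo hi" using bd_exists[OF bd lohi] by blast
      obtain i where i: "i < d" "b!i < lo i \<or> hi i < b!i" "b!i = lo i - 1 \<or> b!i = hi i + 1"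
        using bd_out[OF bd lohi] by blast
      have q0: "lo 0 + 1 \<le> q!0"
      proof (cases "i = 0")
        case True
        then have "b!0 = hi 0 + 1" using i b0 by auto
        moreover obtain t where "t = 1 \<or> t = -1" "q = b[0 := b!0 + t]"
          using bd_nb_box_form[OF bd i(1,2) q] True by blast
        moreover have "q!0 \<le> hi 0" using q(2) d0 unfolding boxS_def by blast
        ultimately show ?thesis using lt d0 bd by (auto simp: bdS_def)
      next
        case False
        then have "q!0 = b!0" using bd_nb_box_other[OF bd i(1,2) q, of 0] by simp
        then show ?thesis using b0 by simp
      qed
      have qb': "q \<in> boxS d lo' hi" using bp q q0 by simp
      have qV: "q \<in> VS d lo' hi" using qb' by (simp add: VS_def)
      have "JJ d lo' hi \<gamma> u b = \<gamma> {b,q} * (u q - u b)"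
        by (rule JJ_single[OF b[folded lo'_def] lohi' q(1) qb'])
      moreover have "JJ d lo' hi \<gamma>' W b = \<gamma>' {b,q} * (W q - W b)"
        by (rule JJ_single[OF b[folded lo'_def] lohi' q(1) qb'])
      moreover have "JJ d lo hi \<gamma> U b = \<gamma> {b,q} * (U q - U b)"
        by (rule JJ_single[OF bd lohi q])
      moreover have "JJ d lo hi \<gamma>' W b = \<gamma>' {b,q} * (W q - W b)"
        by (rule JJ_single[OF bd lohi q])
      moreover have "U q = u q" "U b = u b" using UV qV bV by auto
      ultimately show ?thesis using W(2) bd unfolding lo'_def by simp
    qed
  qed
qed

lemma hz_lemma:
  assumes d2: "2 \<le> d" and lohi: "\<forall>i<d. lo i \<le> hi i"
    and pos: "posc d lo hi \<gamma>" and pos': "posc d lo hi \<gamma>'" and R: "Rel d lo hi \<gamma> \<gamma>'"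
    and sp: "\<forall>b z. b \<in> bdS d lo hi \<longrightarrow> z \<in> nb b \<longrightarrow> z \<in> boxS d lo hi \<longrightarrow> \<gamma> {b,z} = \<gamma>' {b,z}"
  shows "\<forall>p q. p \<in> boxS d lo hi \<longrightarrow> q \<in> boxS d lo hi \<longrightarrow> p!0 = lo 0 \<longrightarrow> q!0 = lo 0 \<longrightarrow> q \<in> nb p
              \<longrightarrow> \<gamma> {p,q} = \<gamma>' {p,q}"
proof (intro allI impI)
  fix p q assume p: "p \<in> boxS d lo hi" and q: "q \<in> boxS d lo hi" and p0: "p!0 = lo 0" and q0: "q!0 = lo 0"
    and qp: "q \<in> nb p"
  obtain l t where lt: "l < length p" "t = 1 \<or> t = -1" "q = p[l := p!l + t]" using qp by (auto simp: nb_mem)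
  have lenp: "length p = d" using p by (simp add: boxS_def)
  have l0: "l \<noteq> 0"
  proof
    assume "l = 0"
    then have "q!0 = p!0 + t" using lt by simp
    then show False using p0 q0 lt(2) by auto
  qed
  have l: "0 < l" "l < d" using l0 lt lenp by auto
  show "\<gamma> {p,q} = \<gamma>' {p,q}"
    using lt(2)
  proof
    assume "t = 1"
    then have "q = p[l := p!l + 1]" using lt by simp
    then show ?thesis by (rule horiz[OF d2 lohi pos pos' R sp p p0 l _ q])
  next
    assume t: "t = -1"
    have "p = q[l := q!l + 1]" using lt t lenp l by simp
    then have "\<gamma> {q,p} = \<gamma>' {q,p}" by (rule horiz[OF d2 lohi pos pos' R sp q q0 l _ p])
    then show ?thesis by (simp add: insert_commute)
  qed
qed

lemma posc_mono: assumes "boxS d lo' hi \<subseteq> boxS d lo hi" "posc d lo hi \<gamma>" shows "posc d lo' hi \<gamma>"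
  using assms unfolding posc_def by blast

lemma main_ind:
  assumes d2: "2 \<le> d"
  shows "\<forall>lo. nat (hi 0 - lo 0) = m \<longrightarrow> (\<forall>i<d. lo i \<le> hi i) \<longrightarrow> posc d lo hi \<gamma> \<longrightarrow> posc d lo hi \<gamma>' \<longrightarrow>
    Rel d lo hi \<gamma> \<gamma>' \<longrightarrow> (\<forall>p q. q \<in> nb p \<longrightarrow> (p \<in> boxS d lo hi \<or> q \<in> boxS d lo hi) \<longrightarrow> \<gamma> {p,q} = \<gamma>' {p,q})"
proof (induction m)
  case 0
  show ?case
  proof (intro allI impI)
    fix lo p q assume m: "nat (hi 0 - lo 0) = 0" and lohi: "\<forall>i<d. lo i \<le> hi i" and pos: "posc d lo hi \<gamma>"
      and pos': "posc d lo hi \<gamma>'" and R: "Rel d lo hi \<gamma> \<gamma>'" and qp: "q \<in> nb p"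
      and box: "p \<in> boxS d lo hi \<or> q \<in> boxS d lo hi"
    have d0: "0 < d" using d2 by simp
    have sp: "\<forall>b z. b \<in> bdS d lo hi \<longrightarrow> z \<in> nb b \<longrightarrow> z \<in> boxS d lo hi \<longrightarrow> \<gamma> {b,z} = \<gamma>' {b,z}"
      using spike[OF d2 lohi pos pos' R] by blast
    note hz = hz_lemma[OF d2 lohi pos pos' R sp]
    have "lo 0 \<le> hi 0" using lohi d0 by blast
    then have eq: "hi 0 = lo 0" using m by simp
    show "\<gamma> {p,q} = \<gamma>' {p,q}"
    proof (cases "p \<in> boxS d lo hi \<and> q \<in> boxS d lo hi")
      case True
      have "lo 0 \<le> p!0 \<and> p!0 \<le> hi 0" "lo 0 \<le> q!0 \<and> q!0 \<le> hi 0"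
        using True d0 unfolding boxS_def by blast+
      then have "p!0 = lo 0" "q!0 = lo 0" using eq by simp_all
      then show ?thesis using hz True qp by blast
    next
      case False
      show ?thesis
      proof (cases "p \<in> boxS d lo hi")
        case True
        then have "q \<in> bdS d lo hi" using False box_nb[OF True qp] by blast
        then have "\<gamma> {q,p} = \<gamma>' {q,p}" using sp nb_sym[OF qp] True by blast
        then show ?thesis by (simp add: insert_commute)
      next
        case False2: False
        then have "q \<in> boxS d lo hi" using box by blast
        then have "p \<in> bdS d lo hi" using False2 box_nb[OF _ nb_sym[OF qp]] by blast
        then show ?thesis using sp qp \<open>q \<in> boxS d lo hi\<close> by blast
      qed
    qed
  qed
next
  case (Suc m)
  show ?case
  proof (intro allI impI)
    fix lo p q assume m: "nat (hi 0 - lo 0) = Suc m" and lohi: "\<forall>i<d. lo i \<le> hi i" and pos: "posc d lo hi \<gamma>"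
      and pos': "posc d lo hi \<gamma>'" and R: "Rel d lo hi \<gamma> \<gamma>'" and qp: "q \<in> nb p"
      and box: "p \<in> boxS d lo hi \<or> q \<in> boxS d lo hi"
    have d0: "0 < d" using d2 by simp
    have sp: "\<forall>b z. b \<in> bdS d lo hi \<longrightarrow> z \<in> nb b \<longrightarrow> z \<in> boxS d lo hi \<longrightarrow> \<gamma> {b,z} = \<gamma>' {b,z}"
      using spike[OF d2 lohi pos pos' R] by blast
    note hz = hz_lemma[OF d2 lohi pos pos' R sp]
    have lt: "lo 0 < hi 0" using m by simp
    define lo' where "lo' = lo(0 := lo 0 + 1)"
    have bp: "x \<in> boxS d lo' hi \<longleftrightarrow> x \<in> boxS d lo hi \<and> lo 0 + 1 \<le> x!0" for x
      unfolding lo'_def by (rule box_peel[OF d0])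
    have R': "Rel d lo' hi \<gamma> \<gamma>'" unfolding lo'_def by (rule peel[OF d2 lohi lt pos pos' R sp hz])
    have m': "nat (hi 0 - lo' 0) = m" using m by (simp add: lo'_def)
    have lohi': "\<forall>i<d. lo' i \<le> hi i" using lohi lt by (auto simp: lo'_def)
    have sub: "boxS d lo' hi \<subseteq> boxS d lo hi" using bp by blast
    have posP: "posc d lo' hi \<gamma>" "posc d lo' hi \<gamma>'" using posc_mono[OF sub] pos pos' by blast+
    have IH: "\<forall>p q. q \<in> nb p \<longrightarrow> (p \<in> boxS d lo' hi \<or> q \<in> boxS d lo' hi) \<longrightarrow> \<gamma> {p,q} = \<gamma>' {p,q}"
      using mp[OF mp[OF mp[OF mp[OF mp[OF spec[OF Suc.IH, of lo'] m'] lohi'] posP(1)] posP(2)] R'] .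
    show "\<gamma> {p,q} = \<gamma>' {p,q}"
    proof (cases "p \<in> boxS d lo hi \<and> q \<in> boxS d lo hi")
      case True
      show ?thesis
      proof (cases "p!0 = lo 0 \<and> q!0 = lo 0")
        case True2: True
        then show ?thesis using hz True qp by blast
      next
        case False2: False
        have "lo 0 \<le> p!0" "lo 0 \<le> q!0" using True d0 unfolding boxS_def by blast+
        then have "lo 0 + 1 \<le> p!0 \<or> lo 0 + 1 \<le> q!0" using False2 by linarith
        then have "p \<in> boxS d lo' hi \<or> q \<in> boxS d lo' hi" using bp True by blast
        then show ?thesis using IH qp by blast
      qed
    next
      case False
      show ?thesis
      proof (cases "p \<in> boxS d lo hi")
        case True
        then have "q \<in> bdS d lo hi" using False box_nb[OF True qp] by blast
        then have "\<gamma> {q,p} = \<gamma>' {q,p}" using sp nb_sym[OF qp] True by blast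
        then show ?thesis by (simp add: insert_commute)
      next
        case False2: False
        then have "q \<in> boxS d lo hi" using box by blast
        then have "p \<in> bdS d lo hi" using False2 box_nb[OF _ nb_sym[OF qp]] by blast
        then show ?thesis using sp qp \<open>q \<in> boxS d lo hi\<close> by blast
      qed
    qed
  qed
qed

lemma main_box:
  assumes "2 \<le> d" "\<forall>i<d. lo i \<le> hi i" "posc d lo hi \<gamma>" "posc d lo hi \<gamma>'" "Rel d lo hi \<gamma> \<gamma>'"
    "q \<in> nb p" "p \<in> boxS d lo hi \<or> q \<in> boxS d lo hi"
  shows "\<gamma> {p,q} = \<gamma>' {p,q}"
proof -
  have "\<forall>p q. q \<in> nb p \<longrightarrow> (p \<in> boxS d lo hi \<or> q \<in> boxS d lo hi) \<longrightarrow> \<gamma> {p,q} = \<gamma>' {p,q}"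
    using mp[OF mp[OF mp[OF mp[OF mp[OF spec[OF main_ind[OF assms(1), of hi "nat (hi 0 - lo 0)" \<gamma> \<gamma>'], of lo] refl] assms(2)] assms(3)] assms(4)] assms(5)] .
  then show ?thesis using assms(6,7) by blast
qed

lemma l1dist_self: "l1dist a a = 0"
  unfolding l1dist_def by simp

lemma l1dist_nb: assumes "b \<in> nb a" shows "l1dist a b = 1"
proof -
  obtain i t where it: "i < length a" "t = 1 \<or> t = -1" "b = a[i := a!i + t]"
    using assms by (auto simp: nb_mem)
  have "l1dist a b = (\<Sum>l<length a. if l = i then 1 else 0)"
    unfolding l1dist_def using it by (intro sum.cong) (auto simp: nth_list_update)
  also have "\<dots> = 1" using it(1) by simp
  finally show ?thesis .
qed

lemma l1dist_one: assumes len: "length b = length a" and e: "l1dist a b = 1" shows "b \<in> nb a"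
proof -
  have "a \<noteq> b" using e l1dist_self by auto
  then obtain i where i: "i < length a" "a!i \<noteq> b!i" using len nth_equalityI by metis
  have nn: "\<And>l. 0 \<le> \<bar>a!l - b!l\<bar>" by simp
  have le: "\<bar>a!i - b!i\<bar> \<le> l1dist a b"
    unfolding l1dist_def by (rule member_le_sum) (use i in auto)
  then have ai: "\<bar>a!i - b!i\<bar> = 1" using e i(2) by auto
  have "l1dist a b = \<bar>a!i - b!i\<bar> + (\<Sum>l\<in>{..<length a} - {i}. \<bar>a!l - b!l\<bar>)"
    unfolding l1dist_def using i(1) by (simp add: sum.remove)
  then have "(\<Sum>l\<in>{..<length a} - {i}. \<bar>a!l - b!l\<bar>) = 0" using e ai by simp
  then have oth: "\<forall>l\<in>{..<length a} - {i}. \<bar>a!l - b!l\<bar> = 0"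
    by (subst (asm) sum_nonneg_eq_0_iff) auto
  define t where "t = b!i - a!i"
  have t: "t = 1 \<or> t = -1" using ai unfolding t_def by auto
  have "b = a[i := a!i + t]"
  proof (rule nth_equalityI)
    show "length b = length (a[i := a!i + t])" using len by simp
    fix l assume "l < length b"
    then show "b!l = a[i := a!i + t]!l" using oth len i(1) by (cases "l = i") (auto simp: t_def)
  qed
  then show ?thesis unfolding nb_mem using i(1) t by blast
qed

abbreviation "lo1 \<equiv> (\<lambda>_::nat. 1::int)"
abbreviation "hiN n \<equiv> (\<lambda>_::nat. int n)"

lemma Dom_eq: "Dom d n = boxS d lo1 (hiN n)"
  unfolding Dom_def boxS_def by simp

lemma Bdry_eq: assumes n: "1 \<le> n" shows "Bdry d n = bdS d lo1 (hiN n)"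
proof
  have lohi: "\<forall>i<d. lo1 i \<le> hiN n i" using n by simp
  show "Bdry d n \<subseteq> bdS d lo1 (hiN n)"
  proof
    fix p assume p: "p \<in> Bdry d n"
    then obtain q where q: "q \<in> Dom d n" "l1dist p q = 1" and len: "length p = d"
      and all: "\<forall>q\<in>Dom d n. 1 \<le> l1dist p q" unfolding Bdry_def by blast
    have qb: "q \<in> boxS d lo1 (hiN n)" using q Dom_eq by blast
    have lq: "length q = d" using q by (simp add: Dom_def)
    have "q \<in> nb p" by (rule l1dist_one) (use len lq q in auto)
    then have pq: "p \<in> nb q" by (rule nb_sym)
    have "p \<notin> Dom d n" using all l1dist_self by force
    then have "p \<notin> boxS d lo1 (hiN n)" using Dom_eq by blast
    then show "p \<in> bdS d lo1 (hiN n)" using box_nb[OF qb pq] by blast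
  qed
  show "bdS d lo1 (hiN n) \<subseteq> Bdry d n"
  proof
    fix p assume p: "p \<in> bdS d lo1 (hiN n)"
    have len: "length p = d" using p by (simp add: bdS_def)
    obtain q where q: "q \<in> nb p" "q \<in> boxS d lo1 (hiN n)" using bd_exists[OF p lohi] by blast
    have "l1dist p q = 1" by (rule l1dist_nb[OF q(1)])
    moreover have "q \<in> Dom d n" using q Dom_eq by blast
    moreover have "1 \<le> l1dist p q'" if q': "q' \<in> Dom d n" for q'
    proof -
      obtain i where i: "i < d" "p!i < 1 \<or> int n < p!i" using bd_out[OF p lohi] by blast
      have "1 \<le> q'!i" "q'!i \<le> int n" using q' i(1) by (auto simp: Dom_def)
      then have "1 \<le> \<bar>p!i - q'!i\<bar>" using i(2) by auto
      also have "\<bar>p!i - q'!i\<bar> \<le> l1dist p q'"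
        unfolding l1dist_def by (rule member_le_sum) (use i len in auto)
      finally show ?thesis .
    qed
    ultimately show "p \<in> Bdry d n" unfolding Bdry_def using len by blast
  qed
qed

lemma VS_eq: assumes "1 \<le> n" shows "Dom d n \<union> Bdry d n = VS d lo1 (hiN n)"
  using Dom_eq Bdry_eq[OF assms] by (simp add: VS_def)

lemma VS_len: "x \<in> VS d lo hi \<Longrightarrow> length x = d"
  unfolding VS_def boxS_def bdS_def by auto

lemma Edges_iff: assumes n: "1 \<le> n"
  shows "{a,b} \<in> Edges d n \<longleftrightarrow> b \<in> nb a \<and> (a \<in> boxS d lo1 (hiN n) \<or> b \<in> boxS d lo1 (hiN n))"
proof
  assume e: "{a,b} \<in> Edges d n"
  have "\<exists>p q. {a,b} = {p,q} \<and> (p \<in> Dom d n \<union> Bdry d n \<and> q \<in> Dom d n \<union> Bdry d n \<and>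
    l1dist p q = 1 \<and> \<not> {p,q} \<subseteq> Bdry d n)"
    using e unfolding Edges_def by (simp only: mem_Collect_eq)
  then obtain p q where pq0: "{a,b} = {p,q} \<and> (p \<in> Dom d n \<union> Bdry d n \<and> q \<in> Dom d n \<union> Bdry d n \<and>
    l1dist p q = 1 \<and> \<not> {p,q} \<subseteq> Bdry d n)" by (elim exE)
  have pq1: "{a,b} = {p,q}" using pq0 by (elim conjE)
  have pq2: "p \<in> Dom d n \<union> Bdry d n" using pq0 by (elim conjE)
  have pq3: "q \<in> Dom d n \<union> Bdry d n" using pq0 by (elim conjE)
  have pq4: "l1dist p q = 1" using pq0 by (elim conjE)
  have pq5: "\<not> {p,q} \<subseteq> Bdry d n" using pq0 by (elim conjE)
  note pq = pq1 pq2 pq3 pq4 pq5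
  have pV: "p \<in> VS d lo1 (hiN n)" using pq(2) VS_eq[OF n] by simp
  have qV: "q \<in> VS d lo1 (hiN n)" using pq(3) VS_eq[OF n] by simp
  have nbd: "\<not> (p \<in> bdS d lo1 (hiN n) \<and> q \<in> bdS d lo1 (hiN n))" using pq(5) Bdry_eq[OF n] by simp
  have bx: "p \<in> boxS d lo1 (hiN n) \<or> q \<in> boxS d lo1 (hiN n)" using pV qV nbd unfolding VS_def by blast
  have qp: "q \<in> nb p" by (rule l1dist_one) (use pq(4) VS_len[OF pV] VS_len[OF qV] in auto)
  have "(a = p \<and> b = q) \<or> (a = q \<and> b = p)" using pq(1) by (simp add: doubleton_eq_iff)
  then show "b \<in> nb a \<and> (a \<in> boxS d lo1 (hiN n) \<or> b \<in> boxS d lo1 (hiN n))"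
  proof
    assume "a = p \<and> b = q" then show ?thesis using qp bx by simp
  next
    assume "a = q \<and> b = p" then show ?thesis using nb_sym[OF qp] bx by auto
  qed
next
  assume ab: "b \<in> nb a \<and> (a \<in> boxS d lo1 (hiN n) \<or> b \<in> boxS d lo1 (hiN n))"
  have ba: "b \<in> nb a" using ab by (elim conjE)
  have ab': "a \<in> nb b" using nb_sym[OF ba] .
  have aV: "a \<in> VS d lo1 (hiN n)"
  proof (cases "a \<in> boxS d lo1 (hiN n)")
    case True
    then show ?thesis using box_sub_VS[of d lo1 "hiN n"] by (rule subsetD[rotated])
  next
    case False
    then have bb: "b \<in> boxS d lo1 (hiN n)" using ab by simp
    show ?thesis using nb_box_VS[OF bb] ab' by (rule subsetD)
  qed
  have bV: "b \<in> VS d lo1 (hiN n)"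
  proof (cases "b \<in> boxS d lo1 (hiN n)")
    case True
    then show ?thesis using box_sub_VS[of d lo1 "hiN n"] by (rule subsetD[rotated])
  next
    case False
    then have aa: "a \<in> boxS d lo1 (hiN n)" using ab by simp
    show ?thesis using nb_box_VS[OF aa] ba by (rule subsetD)
  qed
  have l1: "l1dist a b = 1" by (rule l1dist_nb[OF ba])
  have nb2: "\<not> {a,b} \<subseteq> Bdry d n"
  proof
    assume "{a,b} \<subseteq> Bdry d n"
    then have "a \<in> bdS d lo1 (hiN n)" "b \<in> bdS d lo1 (hiN n)" unfolding Bdry_eq[OF n] by simp_all
    then show False using ab box_bd_disj by metis
  qed
  have aD: "a \<in> Dom d n \<union> Bdry d n" "b \<in> Dom d n \<union> Bdry d n" unfolding VS_eq[OF n] using aV bV by simp_all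
  show "{a,b} \<in> Edges d n"
    unfolding Edges_def mem_Collect_eq
    apply (rule exI, rule exI, rule conjI[OF refl])
    using l1 nb2 aD by simp
qed

lemma Nbr_eq: assumes n: "1 \<le> n"
  shows "Nbr d n p = {q. q \<in> nb p \<and> (p \<in> boxS d lo1 (hiN n) \<or> q \<in> boxS d lo1 (hiN n))}"
  unfolding Nbr_def using Edges_iff[OF n] by blast

lemma harmonic_eq: assumes n: "1 \<le> n"
  shows "harmonic d n \<gamma> u \<longleftrightarrow> harm d lo1 (hiN n) \<gamma> u"
proof -
  have "Nbr d n p = nb p" if "p \<in> boxS d lo1 (hiN n)" for p
    using Nbr_eq[OF n] that by blast
  then show ?thesis unfolding harmonic_def harm_iff hN_def Dom_eq by simp
qed

lemma current_eq: assumes n: "1 \<le> n" and b: "b \<in> Bdry d n"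
  shows "current d n \<gamma> u b = JJ d lo1 (hiN n) \<gamma> u b"
proof -
  have lohi: "\<forall>i<d. lo1 i \<le> hiN n i" using n by simp
  have bb: "b \<in> bdS d lo1 (hiN n)" using b Bdry_eq[OF n] by blast
  have bnot: "b \<notin> boxS d lo1 (hiN n)" using bb box_bd_disj by blast
  obtain q where q: "q \<in> nb b" "q \<in> boxS d lo1 (hiN n)" using bd_exists[OF bb lohi] by blast
  have "Nbr d n b = {q}" using Nbr_eq[OF n, where p = b] bnot bd_unique[OF bb lohi _ _ q] q by blast
  then have "bnbr d n b = q" unfolding bnbr_def by simp
  then show ?thesis unfolding current_def using b JJ_single[OF bb lohi q] by simp
qed

lemma harm_restrict: "harm d lo hi \<gamma> (restrict u (VS d lo hi)) \<longleftrightarrow> harm d lo hi \<gamma> u"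
proof -
  have "x \<in> VS d lo hi" if "x \<in> boxS d lo hi" for x using that box_sub_VS by blast
  then show ?thesis unfolding harm_def by (auto intro!: sum.cong)
qed

lemma JJ_restrict: "b \<in> VS d lo hi \<Longrightarrow> JJ d lo hi \<gamma> (restrict u (VS d lo hi)) b = JJ d lo hi \<gamma> u b"
  unfolding JJ_def by (auto intro!: sum.cong)

lemma harm_diff: "harm d lo hi \<gamma> u \<Longrightarrow> harm d lo hi \<gamma> v \<Longrightarrow> harm d lo hi \<gamma> (\<lambda>x. u x - v x)"
  unfolding harm_def
proof (intro ballI)
  fix x assume "\<forall>x\<in>boxS d lo hi. (\<Sum>y\<in>VS d lo hi. cw d lo hi \<gamma> x y * (u y - u x)) = 0"
    "\<forall>x\<in>boxS d lo hi. (\<Sum>y\<in>VS d lo hi. cw d lo hi \<gamma> x y * (v y - v x)) = 0" "x \<in> boxS d lo hi"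
  then have "(\<Sum>y\<in>VS d lo hi. cw d lo hi \<gamma> x y * (u y - u x)) - (\<Sum>y\<in>VS d lo hi. cw d lo hi \<gamma> x y * (v y - v x)) = 0"
    by simp
  then show "(\<Sum>y\<in>VS d lo hi. cw d lo hi \<gamma> x y * (u y - v y - (u x - v x))) = 0"
    by (simp add: sum_subtractf[symmetric] algebra_simps)
qed

definition Pext where
  "Pext d n \<gamma> \<phi> u \<longleftrightarrow> u \<in> extensional (Dom d n \<union> Bdry d n) \<and> harmonic d n \<gamma> u \<and> (\<forall>b\<in>Bdry d n. u b = \<phi> b)"

lemma Pext_unique: assumes n: "1 \<le> n" and d0: "0 < d" and pos: "posc d lo1 (hiN n) \<gamma>"
  and u: "Pext d n \<gamma> \<phi> u" and v: "Pext d n \<gamma> \<phi> v" shows "u = v"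
proof -
  have hu: "harm d lo1 (hiN n) \<gamma> u" and hv: "harm d lo1 (hiN n) \<gamma> v"
    using u v harmonic_eq[OF n] unfolding Pext_def by blast+
  have hw: "harm d lo1 (hiN n) \<gamma> (\<lambda>x. u x - v x)" by (rule harm_diff[OF hu hv])
  have bw: "\<forall>b\<in>bdS d lo1 (hiN n). u b - v b = 0" using u v Bdry_eq[OF n] unfolding Pext_def by auto
  have "\<forall>x\<in>boxS d lo1 (hiN n). u x - v x = 0" using uniq_box[OF pos d0 hw] bw by simp
  then have "\<forall>x\<in>VS d lo1 (hiN n). u x = v x" using bw by (auto simp: VS_def)
  then show ?thesis using u v VS_eq[OF n] unfolding Pext_def
    by (intro extensionalityI[of u "VS d lo1 (hiN n)"]) auto
qed

lemma Pext_exists: assumes n: "1 \<le> n" and pos: "posc d lo1 (hiN n) \<gamma>"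
  shows "\<exists>u. Pext d n \<gamma> \<phi> u"
proof -
  obtain u0 where u0: "\<forall>p\<in>boxS d lo1 (hiN n). (\<Sum>q\<in>VS d lo1 (hiN n). cw d lo1 (hiN n) \<gamma> p q * (u0 q - u0 p)) = 0"
    "\<forall>b\<in>VS d lo1 (hiN n) - boxS d lo1 (hiN n). u0 b = \<phi> b"
    using dirichlet_exists[OF finite_subset[OF box_sub_VS finite_VS] finite_VS box_sub_VS, where c = "cw d lo1 (hiN n) \<gamma>" and \<phi> = \<phi>]
      cw_sym cw_nonneg[OF pos] by blast
  have "harm d lo1 (hiN n) \<gamma> u0" using u0(1) unfolding harm_def .
  then have "harmonic d n \<gamma> (restrict u0 (VS d lo1 (hiN n)))" using harm_restrict harmonic_eq[OF n] by blast
  moreover have "\<forall>b\<in>Bdry d n. restrict u0 (VS d lo1 (hiN n)) b = \<phi> b"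
    using u0(2) Bdry_eq[OF n] VS_minus_box by (auto simp: VS_def)
  ultimately show ?thesis unfolding Pext_def VS_eq[OF n] by (intro exI[of _ "restrict u0 (VS d lo1 (hiN n))"]) auto
qed

lemma harm_ext_P: assumes n: "1 \<le> n" and d0: "0 < d" and pos: "posc d lo1 (hiN n) \<gamma>"
  shows "Pext d n \<gamma> \<phi> (harm_ext d n \<gamma> \<phi>)"
proof -
  have "\<exists>!u. Pext d n \<gamma> \<phi> u" using Pext_exists[OF n pos] Pext_unique[OF n d0 pos] by blast
  then show ?thesis unfolding harm_ext_def Pext_def[symmetric] by (rule theI')
qed

lemma harm_ext_eq: assumes n: "1 \<le> n" and d0: "0 < d" and pos: "posc d lo1 (hiN n) \<gamma>"
  and P: "Pext d n \<gamma> \<phi> u" shows "harm_ext d n \<gamma> \<phi> = u"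
  using Pext_unique[OF n d0 pos harm_ext_P[OF n d0 pos] P] .

theorem theorem1p1:
  fixes d n :: nat and \<gamma> \<gamma>' :: "int list set \<Rightarrow> real"
  assumes "d \<ge> 2" and "n \<ge> 1"
    and "\<forall>e\<in>Edges d n. \<gamma> e > 0"
    and "\<forall>e\<in>Edges d n. \<gamma>' e > 0"
    and "\<forall>\<phi>. DtN d n \<gamma> \<phi> = DtN d n \<gamma>' \<phi>"
  shows "\<forall>e\<in>Edges d n. \<gamma> e = \<gamma>' e"
proof -
  have d2: "2 \<le> d" and n: "1 \<le> n" using assms(1,2) by auto
  have d0: "0 < d" using d2 by simp
  have lohi: "\<forall>i<d. lo1 i \<le> hiN n i" using n by simp
  have pos: "posc d lo1 (hiN n) \<gamma>" unfolding posc_def using assms(3) Edges_iff[OF n] by blast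
  have pos': "posc d lo1 (hiN n) \<gamma>'" unfolding posc_def using assms(4) Edges_iff[OF n] by blast
  have R: "Rel d lo1 (hiN n) \<gamma> \<gamma>'" unfolding Rel_def
  proof (intro allI impI)
    fix u assume hu: "harm d lo1 (hiN n) \<gamma> u"
    define u' where "u' = harm_ext d n \<gamma>' u"
    have P': "Pext d n \<gamma>' u u'" unfolding u'_def by (rule harm_ext_P[OF n d0 pos'])
    have Pu: "Pext d n \<gamma> u (restrict u (VS d lo1 (hiN n)))"
    proof -
      have BV: "Bdry d n \<subseteq> VS d lo1 (hiN n)" using VS_eq[OF n] by blast
      have e1: "restrict u (VS d lo1 (hiN n)) \<in> extensional (Dom d n \<union> Bdry d n)"
        using VS_eq[OF n] by simp
      have e2: "harmonic d n \<gamma> (restrict u (VS d lo1 (hiN n)))"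
        using hu harm_restrict harmonic_eq[OF n] by blast
      have e3: "\<forall>b\<in>Bdry d n. restrict u (VS d lo1 (hiN n)) b = u b" using BV by auto
      show ?thesis unfolding Pext_def using e1 e2 e3 by blast
    qed
    have he: "harm_ext d n \<gamma> u = restrict u (VS d lo1 (hiN n))" by (rule harm_ext_eq[OF n d0 pos Pu])
    show "\<exists>u'. harm d lo1 (hiN n) \<gamma>' u' \<and>
        (\<forall>b\<in>bdS d lo1 (hiN n). u' b = u b \<and> JJ d lo1 (hiN n) \<gamma>' u' b = JJ d lo1 (hiN n) \<gamma> u b)"
    proof (intro exI[of _ u'] conjI ballI)
      show "harm d lo1 (hiN n) \<gamma>' u'" using P' harmonic_eq[OF n] unfolding Pext_def by blast
      fix b assume b: "b \<in> bdS d lo1 (hiN n)"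
      have bB: "b \<in> Bdry d n" using b Bdry_eq[OF n] by blast
      show "u' b = u b" using P' bB unfolding Pext_def by blast
      have bV: "b \<in> VS d lo1 (hiN n)" using b by (simp add: VS_def)
      have "JJ d lo1 (hiN n) \<gamma>' u' b = current d n \<gamma>' u' b" using current_eq[OF n bB] by simp
      also have "\<dots> = DtN d n \<gamma>' u b" unfolding DtN_def u'_def ..
      also have "\<dots> = DtN d n \<gamma> u b" using assms(5) by simp
      also have "\<dots> = current d n \<gamma> (restrict u (VS d lo1 (hiN n))) b" unfolding DtN_def he ..
      also have "\<dots> = JJ d lo1 (hiN n) \<gamma> (restrict u (VS d lo1 (hiN n))) b" using current_eq[OF n bB] by simp
      also have "\<dots> = JJ d lo1 (hiN n) \<gamma> u b" using JJ_restrict[OF bV] by simp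
      finally show "JJ d lo1 (hiN n) \<gamma>' u' b = JJ d lo1 (hiN n) \<gamma> u b" .
    qed
  qed
  show ?thesis
  proof
    fix e assume e: "e \<in> Edges d n"
    then obtain p q where pq: "e = {p,q}" unfolding Edges_def by blast
    then have "q \<in> nb p \<and> (p \<in> boxS d lo1 (hiN n) \<or> q \<in> boxS d lo1 (hiN n))"
      using e Edges_iff[OF n] by simp
    then show "\<gamma> e = \<gamma>' e" using main_box[OF d2 lohi pos pos' R] pq by blast
  qed
qed

end
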